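(* Fix a cooperative Markov game and a stationary joint policy $\pi$ as described in the context. (i) For every deterministic sequence $\Lambda=\lambda_0\lambda_1\cdots\in\{0,1\}^\omega$ of communication availabilities, $$KL\big(\Gamma^{full}\,\|\,\Gamma^{img}_{0}\big)\ge KL\big(\Gamma^{full}\,\|\,\Gamma^{int}_{\Lambda}\big).$$ (ii) Let $q\in(0,1]$. Let $\Lambda=\lambda_0\lambda_1\cdots$ be random, with the $\lambda_t$ i.i.d. Bernoulli with $\Pr(\lambda_t=1)=1-q$, and independent of the game's randomness. Let $\Gamma^{int}=\mathbb{E}_\Lambda[\Gamma^{int}_\Lambda]$. Then $$KL\big(\Gamma^{full}\,\|\,\Gamma^{img}_{0}\big)\ge \frac{1}{q}\,KL\big(\Gamma^{full}\,\|\,\Gamma^{int}\big).$$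
   Context: Multiagent model: there are $N$ agents. Agent $i$ is modeled by a finite MDP $\mathcal{M}^i=(\mathcal{S}^i,s_I^i,\mathcal{A}^i,\mathcal{T}^i)$. Here $\mathcal{S}^i$ is a finite state set, $s_I^i\in\mathcal{S}^i$ is the initial state, $\mathcal{A}^i$ is a finite action set, and $\mathcal{T}^i:\mathcal{S}^i\times\mathcal{A}^i\to\Delta(\mathcal{S}^i)$ is the transition kernel. The cooperative Markov game has joint state set $\mathbf{S}=\prod_i\mathcal{S}^i$, joint initial state $\mathbf{s}_I=(s_I^1,\dots,s_I^N)$, and joint action set $\mathbf{A}=\prod_i\mathcal{A}^i$. Its transition kernel is $\mathbf{T}(\mathbf{s},\mathbf{a},\mathbf{y})=\prod_{i}\mathcal{T}^i(s^i,a^i,y^i)$. A stationary joint policy is a map $\pi:\mathbf{S}\to\Delta(\mathbf{A})$. A joint path is an infinite sequence $\mathbf{s}_0\mathbf{a}_0\mathbf{s}_1\mathbf{a}_1\cdots\in(\mathbf{S}\times\mathbf{A})^\omega$ with $\mathbf{s}_0=\mathbf{s}_I$. All random sampling below is mutually independent given the stated conditioning. Full-communication execution: at each time $t$, $\mathbf{a}_t\sim\pi(\mathbf{s}_t)$ is drawn once for the whole team. Each agent $i$ then moves to $s^i_{t+1}\sim\mathcal{T}^i(s^i_t,a^i_t)$. $\Gamma^{full}$ denotes the resulting distribution over joint paths. Imaginary play with loss time $t_{loss}\in\{0,1,\dots\}\cup\{\infty\}$ (Algorithm 1): - For $t<t_{loss}$, the team acts exactly as under full communication. Each agent $i$ records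 $\hat s^j_{t,i}=s^j_t$ for all $j\ne i$, and records $\hat{\mathbf a}_{t,i}=\mathbf a_t$. - For $t\ge t_{loss}$, each agent $i$ acts separately and does not observe the others. First it sets its imaginary teammate states. If $t=0$, it sets $\hat s^j_{0,i}=s_I^j$ for $j\neq i$. Otherwise it samples $\hat s^j_{t,i}\sim\mathcal{T}^j(\hat s^j_{t-1,i},\hat a^j_{t-1,i})$ for $j\ne i$, where $\hat a^j_{t-1,i}$ is the $j$-th component of $\hat{\mathbf a}_{t-1,i}$. - Agent $i$ then samples its own joint action $\hat{\mathbf a}_{t,i}\sim\pi(\hat s^1_{t,i},\dots,\hat s^{i-1}_{t,i},s^i_t,\hat s^{i+1}_{t,i},\dots,\hat s^N_{t,i})$. - Agent $i$ executes only its own component $\hat a^i_{t,i}$, and moves to $s^i_{t+1}\sim\mathcal{T}^i(s^i_t,\hat a^i_{t,i})$. - The realized joint action at time $t$ is $\mathbf a_t=(\hat a^1_{t,1},\dots,\hat a^N_{t,N})$. $\Gamma^{img}_{t_{loss}}$ denotes the induced distribution over realized joint paths. Intermittent communication with availability sequence $\Lambda=\lambda_0\lambda_1\cdots\in\{0,1\}^\omega$ (Algorithm 2): at each time $t$, the team acts as follows. - If $\lambda_t=1$, the team acts as under full communication. It samples a single $\mathbf a_t\sim\pi(\mathbf s_t)$, and each agent $i$ sets $\hat s^j_{t,i}=s^j_t$ for $j\neq i$ and $\hat{\mathbf a}_{t,i}=\mathbf a_t$. - If $\lambda_t=0$, each agent $i$ acts separately. First it sets its imaginary teammate states. If $t=0$,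 it sets $\hat s^j_{0,i}=s_I^j$; otherwise it samples $\hat s^j_{t,i}\sim\mathcal{T}^j(\hat s^j_{t-1,i},\hat a^j_{t-1,i})$ for $j\ne i$. - It then samples $\hat{\mathbf a}_{t,i}\sim\pi(\hat s^1_{t,i},\dots,s^i_t,\dots,\hat s^N_{t,i})$, and executes its component $\hat a^i_{t,i}$. - Each agent $i$ moves to $s^i_{t+1}\sim\mathcal{T}^i(s^i_t,\cdot)$ under the action it executed. $\Gamma^{int}_\Lambda$ denotes the induced distribution over realized joint paths. $KL$ is Kullback–Leibler divergence. *)

theory Defs
  imports "HOL-Probability.Probability"
begin

text \<open>Agents are indexed by 0..<N. Joint states / joint actions are
  functions on {..<N} (extensional: value undefined outside {..<N}).\<close>

type_synonym ('s,'a) step = "(nat \<Rightarrow> 's) \<times> (nat \<Rightarrow> 'a)"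

definition joint_T :: "nat \<Rightarrow> (nat \<Rightarrow> 's \<Rightarrow> 'a \<Rightarrow> 's pmf) \<Rightarrow> (nat \<Rightarrow> 's) \<Rightarrow> (nat \<Rightarrow> 'a) \<Rightarrow> (nat \<Rightarrow> 's) pmf" where
  "joint_T N T s a = Pi_pmf {..<N} undefined (\<lambda>i. T i (s i) (a i))"

definition full_step ::
  "nat \<Rightarrow> (nat \<Rightarrow> 's \<Rightarrow> 'a \<Rightarrow> 's pmf) \<Rightarrow> ((nat \<Rightarrow> 's) \<Rightarrow> (nat \<Rightarrow> 'a) pmf)
   \<Rightarrow> (nat \<Rightarrow> 's) \<Rightarrow> (('s,'a) step \<times> (nat \<Rightarrow> 's)) pmf" where
  "full_step N T \<pi> s =
     bind_pmf (\<pi> s) (\<lambda>a. bind_pmf (joint_T N T s a) (\<lambda>s'. return_pmf ((s, a), s')))"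

fun full_prefix_st ::
  "nat \<Rightarrow> (nat \<Rightarrow> 's) \<Rightarrow> (nat \<Rightarrow> 's \<Rightarrow> 'a \<Rightarrow> 's pmf) \<Rightarrow> ((nat \<Rightarrow> 's) \<Rightarrow> (nat \<Rightarrow> 'a) pmf)
   \<Rightarrow> nat \<Rightarrow> (('s,'a) step list \<times> (nat \<Rightarrow> 's)) pmf" where
  "full_prefix_st N sI T \<pi> 0 = return_pmf ([], restrict sI {..<N})"
| "full_prefix_st N sI T \<pi> (Suc n) =
     bind_pmf (full_prefix_st N sI T \<pi> n) (\<lambda>(p, s).
       map_pmf (\<lambda>(x, s'). (p @ [x], s')) (full_step N T \<pi> s))"

definition full_prefix where
  "full_prefix N sI T \<pi> n = map_pmf fst (full_prefix_st N sI T \<pi> n)"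

text \<open>Internal state:
  (true joint state s, hs, ha) where hs i j is agent i's record of agent j's state
  at the previous time step and ha i is agent i's joint action recorded at the
  previous time step.\<close>
definition int_step ::
  "nat \<Rightarrow> (nat \<Rightarrow> 's) \<Rightarrow> (nat \<Rightarrow> 's \<Rightarrow> 'a \<Rightarrow> 's pmf) \<Rightarrow> ((nat \<Rightarrow> 's) \<Rightarrow> (nat \<Rightarrow> 'a) pmf)
   \<Rightarrow> bool \<Rightarrow> nat \<Rightarrow> (nat \<Rightarrow> 's) \<times> (nat \<Rightarrow> nat \<Rightarrow> 's) \<times> (nat \<Rightarrow> nat \<Rightarrow> 'a)
   \<Rightarrow> (('s,'a) step \<times> ((nat \<Rightarrow> 's) \<times> (nat \<Rightarrow> nat \<Rightarrow> 's) \<times> (nat \<Rightarrow> nat \<Rightarrow> 'a))) pmf" where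
  "int_step N sI T \<pi> lam t st =
    (case st of (s, hs, ha) \<Rightarrow>
     if lam then
       bind_pmf (\<pi> s) (\<lambda>a. bind_pmf (joint_T N T s a) (\<lambda>s'.
         return_pmf ((s, a), (s', \<lambda>i. s, \<lambda>i. a))))
     else
       bind_pmf
         (Pi_pmf {..<N} undefined (\<lambda>i.
            if t = 0 then return_pmf (restrict sI {..<N})
            else Pi_pmf ({..<N} - {i}) undefined (\<lambda>j. T j (hs i j) (ha i j))))
         (\<lambda>hs'. bind_pmf
           (Pi_pmf {..<N} undefined (\<lambda>i. \<pi> ((hs' i)(i := s i))))
           (\<lambda>ha'. let a = (\<lambda>i. if i < N then ha' i i else undefined) in
              bind_pmf (joint_T N T s a) (\<lambda>s'.
                return_pmf ((s, a), (s', hs', ha'))))))"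

fun int_prefix_st ::
  "nat \<Rightarrow> (nat \<Rightarrow> 's) \<Rightarrow> (nat \<Rightarrow> 's \<Rightarrow> 'a \<Rightarrow> 's pmf) \<Rightarrow> ((nat \<Rightarrow> 's) \<Rightarrow> (nat \<Rightarrow> 'a) pmf)
   \<Rightarrow> (nat \<Rightarrow> bool) \<Rightarrow> nat
   \<Rightarrow> (('s,'a) step list \<times> ((nat \<Rightarrow> 's) \<times> (nat \<Rightarrow> nat \<Rightarrow> 's) \<times> (nat \<Rightarrow> nat \<Rightarrow> 'a))) pmf" where
  "int_prefix_st N sI T \<pi> \<Lambda> 0 =
     return_pmf ([], (restrict sI {..<N}, \<lambda>i. restrict sI {..<N}, \<lambda>i. undefined))"
| "int_prefix_st N sI T \<pi> \<Lambda> (Suc n) =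
     bind_pmf (int_prefix_st N sI T \<pi> \<Lambda> n) (\<lambda>(p, st).
       map_pmf (\<lambda>(x, st'). (p @ [x], st')) (int_step N sI T \<pi> (\<Lambda> n) n st))"

text \<open>Length-n prefix marginal of \<Gamma>^int_\<Lambda> (\<Lambda> t = True means \<lambda>_t = 1).\<close>
definition int_prefix where
  "int_prefix N sI T \<pi> \<Lambda> n = map_pmf fst (int_prefix_st N sI T \<pi> \<Lambda> n)"

definition img_prefix where
  "img_prefix N sI T \<pi> (tloss :: enat) n = int_prefix N sI T \<pi> (\<lambda>t. enat t < tloss) n"

text \<open>Length-n prefix marginal of the mixture E_\<Lambda>[\<Gamma>^int_\<Lambda>], \<lambda>_t i.i.d. with
  Pr(\<lambda>_t = 1) = 1 - q (the prefix of length n only depends on \<lambda>_0..\<lambda>_{n-1}).\<close>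
definition int_mix_prefix where
  "int_mix_prefix N sI T \<pi> (q :: real) n =
     bind_pmf (Pi_pmf {..<n} False (\<lambda>_. bernoulli_pmf (1 - q)))
       (\<lambda>\<Lambda>. int_prefix N sI T \<pi> \<Lambda> n)"

definition pmf_KL :: "'a pmf \<Rightarrow> 'a pmf \<Rightarrow> ereal" where
  "pmf_KL P Q =
    (if \<exists>x\<in>set_pmf P. pmf Q x = 0 then \<infinity>
     else ereal (\<Sum>x\<in>set_pmf P. pmf P x * ln (pmf P x / pmf Q x)))"

text \<open>KL divergence of two distributions over infinite joint paths, given by
  their families of finite-prefix marginals: the supremum (= limit) of the
  KL divergences of the finite-dimensional marginals.\<close>
definition path_KL :: "(nat \<Rightarrow> 'a pmf) \<Rightarrow> (nat \<Rightarrow> 'a pmf) \<Rightarrow> ereal" where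
  "path_KL P Q = (SUP n. pmf_KL (P n) (Q n))"

definition wf_game where
  "wf_game N S sI A T \<pi> \<longleftrightarrow>
     (\<forall>i<N. finite (S i) \<and> sI i \<in> S i \<and> finite (A i) \<and> A i \<noteq> {} \<and>
        (\<forall>s\<in>S i. \<forall>a\<in>A i. set_pmf (T i s a) \<subseteq> S i)) \<and>
     (\<forall>s\<in>PiE {..<N} S. set_pmf (\<pi> s) \<subseteq> PiE {..<N} A)"

end

theory Submission
  imports Defs
begin


definition ex :: "'a pmf \<Rightarrow> ('a \<Rightarrow> real) \<Rightarrow> real" where
  "ex M f = (\<Sum>x\<in>set_pmf M. pmf M x * f x)"

lemma ex_integral: "finite (set_pmf M) \<Longrightarrow> ex M f = measure_pmf.expectation M f"
  unfolding ex_def by (subst integral_measure_pmf_real[of "set_pmf M"]) (auto simp: mult.commute)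

lemma ex_return[simp]: "ex (return_pmf x) f = f x"
  by (simp add: ex_def)

lemma ex_cong: "(\<And>x. x \<in> set_pmf M \<Longrightarrow> f x = g x) \<Longrightarrow> ex M f = ex M g"
  unfolding ex_def by (intro sum.cong) auto

lemma ex_mono: "(\<And>x. x \<in> set_pmf M \<Longrightarrow> f x \<le> g x) \<Longrightarrow> ex M f \<le> ex M g"
  unfolding ex_def by (intro sum_mono mult_left_mono) auto

lemma ex_add: "ex M (\<lambda>x. f x + g x) = ex M f + ex M g"
  unfolding ex_def by (simp add: algebra_simps sum.distrib)

lemma ex_diff: "ex M (\<lambda>x. f x - g x) = ex M f - ex M g"
  unfolding ex_def by (simp add: algebra_simps sum_subtractf)

lemma ex_sum: "ex M (\<lambda>x. \<Sum>i\<in>I. f i x) = (\<Sum>i\<in>I. ex M (f i))"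
  unfolding ex_def by (simp add: sum_distrib_left sum.swap[of _ I])

lemma ex_cmult: "ex M (\<lambda>x. c * f x) = c * ex M f"
  unfolding ex_def by (simp add: sum_distrib_left algebra_simps)

lemma ex_const: "finite (set_pmf M) \<Longrightarrow> ex M (\<lambda>x. c) = c"
  unfolding ex_def using sum_pmf_eq_1[of "set_pmf M" M]
  by (simp add: sum_distrib_right[symmetric])

lemma pmf_bind_finite:
  assumes "finite (set_pmf M)"
  shows "pmf (bind_pmf M K) y = (\<Sum>x\<in>set_pmf M. pmf M x * pmf (K x) y)"
  unfolding pmf_bind using assms
  by (subst integral_measure_pmf_real[of "set_pmf M"]) (auto simp: mult.commute)

lemma ex_bind:
  assumes fM: "finite (set_pmf M)" and fK: "\<And>x. x \<in> set_pmf M \<Longrightarrow> finite (set_pmf (K x))"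
  shows "ex (bind_pmf M K) f = ex M (\<lambda>x. ex (K x) f)"
proof -
  define Y where "Y = set_pmf (bind_pmf M K)"
  have fY: "finite Y" using assms by (auto simp: Y_def)
  have "ex (bind_pmf M K) f = (\<Sum>y\<in>Y. (\<Sum>x\<in>set_pmf M. pmf M x * pmf (K x) y) * f y)"
    unfolding ex_def Y_def using fM by (simp add: pmf_bind_finite)
  also have "\<dots> = (\<Sum>x\<in>set_pmf M. pmf M x * (\<Sum>y\<in>Y. pmf (K x) y * f y))"
    by (simp add: sum_distrib_right sum_distrib_left sum.swap[of _ Y] algebra_simps)
  also have "\<dots> = (\<Sum>x\<in>set_pmf M. pmf M x * ex (K x) f)"
  proof (intro sum.cong refl arg_cong[where f="\<lambda>z. _ * z"])
    fix x assume x: "x \<in> set_pmf M"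
    have sub: "set_pmf (K x) \<subseteq> Y" using x by (auto simp: Y_def)
    show "(\<Sum>y\<in>Y. pmf (K x) y * f y) = ex (K x) f"
      unfolding ex_def using sub fY
      by (intro sum.mono_neutral_right) (auto simp: set_pmf_eq)
  qed
  finally show ?thesis by (simp add: ex_def)
qed

lemma ex_map: "finite (set_pmf M) \<Longrightarrow> ex (map_pmf g M) f = ex M (\<lambda>x. f (g x))"
  unfolding map_pmf_def by (subst ex_bind) auto

lemma pmf_bind_inj:
  assumes "\<And>y z. z \<in> set_pmf (K y) \<Longrightarrow> g z = y"
  shows "pmf (bind_pmf M K) x = pmf M (g x) * pmf (K (g x)) x"
proof -
  have "pmf (bind_pmf M K) x = measure_pmf.expectation M (\<lambda>y. pmf (K y) x)"
    by (rule pmf_bind)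
  also have "\<dots> = measure_pmf.expectation M (\<lambda>y. indicator {g x} y * pmf (K (g x)) x)"
    by (intro Bochner_Integration.integral_cong refl)
       (auto simp: indicator_def pmf_eq_0_set_pmf dest: assms)
  also have "\<dots> = pmf M (g x) * pmf (K (g x)) x"
    by (simp add: measure_pmf_single)
  finally show ?thesis .
qed

lemma disintegrate:
  "W = bind_pmf (map_pmf fst W) (\<lambda>u. cond_pmf W {z. fst z = u})"
  by (rule bind_cond_pmf_cancel[symmetric])
     (auto simp: pmf_map vimage_def measure_pmf_single intro!: arg_cong[where f="measure_pmf.prob W"])

lemma disintegrate':
  "W = bind_pmf (map_pmf fst W) (\<lambda>u. map_pmf (Pair u) (map_pmf snd (cond_pmf W {z. fst z = u})))"
proof -
  have "W = bind_pmf (map_pmf fst W) (\<lambda>u. cond_pmf W {z. fst z = u})" by (rule disintegrate)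
  also have "\<dots> = bind_pmf (map_pmf fst W) (\<lambda>u. map_pmf (Pair u) (map_pmf snd (cond_pmf W {z. fst z = u})))"
  proof (intro bind_pmf_cong refl)
    fix u assume o: "u \<in> set_pmf (map_pmf fst W)"
    have ne: "set_pmf W \<inter> {z. fst z = u} \<noteq> {}" using o by auto
    show "cond_pmf W {z. fst z = u} = map_pmf (Pair u) (map_pmf snd (cond_pmf W {z. fst z = u}))"
      unfolding pmf.map_comp
      by (rule map_pmf_idI[symmetric]) (use ne in \<open>auto simp: set_cond_pmf\<close>)
  qed
  finally show ?thesis .
qed


lemma disint_fin:
  assumes fin: "finite (set_pmf J)"
    and dis: "map_pmf (\<lambda>x. (f x, g x)) J = bind_pmf J (\<lambda>x. map_pmf (Pair (f x)) (c x))"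
    and x: "x \<in> set_pmf J"
  shows "finite (set_pmf (c x))"
proof -
  have "set_pmf (c x) \<subseteq> snd ` set_pmf (map_pmf (\<lambda>x. (f x, g x)) J)"
    unfolding dis using x by force
  moreover have "finite (snd ` set_pmf (map_pmf (\<lambda>x. (f x, g x)) J))" using fin by simp
  ultimately show ?thesis by (rule finite_subset)
qed

lemma ex_pair_disint:
  assumes fin: "finite (set_pmf J)"
    and fc: "\<And>x. x \<in> set_pmf J \<Longrightarrow> finite (set_pmf (c x))"
    and dis: "map_pmf (\<lambda>x. (f x, g x)) J = bind_pmf J (\<lambda>x. map_pmf (Pair (f x)) (c x))"
    and meas: "\<And>x y b. x \<in> set_pmf J \<Longrightarrow> y \<in> set_pmf J \<Longrightarrow> f x = f y \<Longrightarrow> \<Psi> x b = \<Psi> y b"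
    and cm: "\<And>x y. x \<in> set_pmf J \<Longrightarrow> y \<in> set_pmf J \<Longrightarrow> f x = f y \<Longrightarrow> c x = c y"
  shows "ex J (\<lambda>x. \<Psi> x (g x)) = ex J (\<lambda>x. ex (c x) (\<Psi> x))"
proof -
  define rep where "rep v = (SOME x. x \<in> set_pmf J \<and> f x = v)" for v
  have rep: "rep (f x) \<in> set_pmf J \<and> f (rep (f x)) = f x" if "x \<in> set_pmf J" for x
    unfolding rep_def by (rule someI[of _ x]) (use that in auto)
  define \<Psi>' where "\<Psi>' = (\<lambda>(v, b). \<Psi> (rep v) b)"
  have "ex J (\<lambda>x. \<Psi> x (g x)) = ex J (\<lambda>x. \<Psi>' (f x, g x))"
    by (intro ex_cong) (auto simp: \<Psi>'_def dest: rep intro: meas[symmetric])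
  also have "\<dots> = ex (map_pmf (\<lambda>x. (f x, g x)) J) \<Psi>'"
    using fin by (simp add: ex_map)
  also have "\<dots> = ex (bind_pmf J (\<lambda>x. map_pmf (Pair (f x)) (c x))) \<Psi>'"
    by (simp add: dis)
  also have "\<dots> = ex J (\<lambda>x. ex (map_pmf (Pair (f x)) (c x)) \<Psi>')"
    using fin fc by (intro ex_bind) auto
  also have "\<dots> = ex J (\<lambda>x. ex (c x) (\<Psi> x))"
  proof (intro ex_cong)
    fix x assume x: "x \<in> set_pmf J"
    have "\<Psi> (rep (f x)) = \<Psi> x" using rep[OF x] x by (intro ext meas) auto
    then show "ex (map_pmf (Pair (f x)) (c x)) \<Psi>' = ex (c x) (\<Psi> x)"
      using fc[OF x] by (simp add: ex_map \<Psi>'_def)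
  qed
  finally show ?thesis .
qed

lemma gibbs:
  assumes fin: "finite (set_pmf J)"
    and dis: "map_pmf (\<lambda>x. (f x, g x)) J = bind_pmf J (\<lambda>x. map_pmf (Pair (f x)) (c x))"
    and cm: "\<And>x y. x \<in> set_pmf J \<Longrightarrow> y \<in> set_pmf J \<Longrightarrow> f x = f y \<Longrightarrow> c x = c y"
    and dm: "\<And>x y. x \<in> set_pmf J \<Longrightarrow> y \<in> set_pmf J \<Longrightarrow> f x = f y \<Longrightarrow> d x = d y"
    and dpos: "\<And>x. x \<in> set_pmf J \<Longrightarrow> pmf (d x) (g x) > 0"
  shows "ex J (\<lambda>x. ln (pmf (d x) (g x))) \<le> ex J (\<lambda>x. ln (pmf (c x) (g x)))"
proof -
  have fc: "finite (set_pmf (c x))" if "x \<in> set_pmf J" for x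
    by (rule disint_fin[OF fin dis that])
  have cpos: "pmf (c x) (g x) > 0" if x: "x \<in> set_pmf J" for x
  proof -
    have "(f x, g x) \<in> set_pmf (map_pmf (\<lambda>x. (f x, g x)) J)" using x by auto
    then obtain y where y: "y \<in> set_pmf J" "f y = f x" "g x \<in> set_pmf (c y)"
      unfolding dis by auto
    then have "c y = c x" using cm x by blast
    with y show ?thesis by (simp add: pmf_positive)
  qed
  have "ex J (\<lambda>x. ln (pmf (d x) (g x))) - ex J (\<lambda>x. ln (pmf (c x) (g x)))
      = ex J (\<lambda>x. ln (pmf (d x) (g x)) - ln (pmf (c x) (g x)))"
    by (simp add: ex_diff)
  also have "\<dots> \<le> ex J (\<lambda>x. pmf (d x) (g x) / pmf (c x) (g x) - 1)"
  proof (intro ex_mono)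
    fix x assume x: "x \<in> set_pmf J"
    have p1: "pmf (d x) (g x) > 0" "pmf (c x) (g x) > 0" using dpos[OF x] cpos[OF x] by auto
    then have "ln (pmf (d x) (g x)) - ln (pmf (c x) (g x)) = ln (pmf (d x) (g x) / pmf (c x) (g x))"
      by (simp add: ln_div)
    also have "\<dots> \<le> pmf (d x) (g x) / pmf (c x) (g x) - 1"
      using p1 by (intro ln_le_minus_one) auto
    finally show "ln (pmf (d x) (g x)) - ln (pmf (c x) (g x)) \<le> pmf (d x) (g x) / pmf (c x) (g x) - 1" .
  qed
  also have "\<dots> = ex J (\<lambda>x. pmf (d x) (g x) / pmf (c x) (g x)) - 1"
    using fin by (simp add: ex_diff ex_const)
  also have "ex J (\<lambda>x. pmf (d x) (g x) / pmf (c x) (g x)) = ex J (\<lambda>x. ex (c x) (\<lambda>b. pmf (d x) b / pmf (c x) b))"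
  proof (rule ex_pair_disint[OF fin fc dis _ cm, where \<Psi>="\<lambda>x b. pmf (d x) b / pmf (c x) b"])
    fix x y b assume xy: "x \<in> set_pmf J" "y \<in> set_pmf J" "f x = f y"
    have "c x = c y" "d x = d y" using cm[OF xy] dm[OF xy] by auto
    then show "pmf (d x) b / pmf (c x) b = pmf (d y) b / pmf (c y) b" by simp
  qed auto
  also have "\<dots> \<le> ex J (\<lambda>x. 1)"
  proof (intro ex_mono)
    fix x assume x: "x \<in> set_pmf J"
    have "ex (c x) (\<lambda>b. pmf (d x) b / pmf (c x) b) = (\<Sum>b\<in>set_pmf (c x). pmf (d x) b)"
      unfolding ex_def by (intro sum.cong) (auto simp: set_pmf_eq)
    also have "\<dots> = measure_pmf.prob (d x) (set_pmf (c x))"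
      using fc[OF x] by (simp add: measure_measure_pmf_finite)
    also have "\<dots> \<le> 1" by simp
    finally show "ex (c x) (\<lambda>b. pmf (d x) b / pmf (c x) b) \<le> 1" .
  qed
  also have "ex J (\<lambda>x. 1) = 1" using fin by (simp add: ex_const)
  finally show ?thesis by simp
qed


lemma disint_pos:
  assumes dis: "map_pmf (\<lambda>x. (f x, g x)) J = bind_pmf J (\<lambda>x. map_pmf (Pair (f x)) (c x))"
    and cm: "\<And>x y. x \<in> set_pmf J \<Longrightarrow> y \<in> set_pmf J \<Longrightarrow> f x = f y \<Longrightarrow> c x = c y"
    and x: "x \<in> set_pmf J"
  shows "pmf (c x) (g x) > 0"
proof -
  have "(f x, g x) \<in> set_pmf (map_pmf (\<lambda>x. (f x, g x)) J)" using x by auto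
  then obtain y where y: "y \<in> set_pmf J" "f y = f x" "g x \<in> set_pmf (c y)"
    unfolding dis by auto
  then have "c y = c x" using cm x by blast
  with y show ?thesis by (simp add: pmf_positive)
qed


lemma KL_mix:
  assumes finP: "finite (set_pmf P)" and finB: "finite (set_pmf B)"
    and pos: "\<And>b x. b \<in> set_pmf B \<Longrightarrow> x \<in> set_pmf P \<Longrightarrow> pmf (Qf b) x > 0"
  shows "pmf_KL P (bind_pmf B Qf) \<le>
         ereal (ex B (\<lambda>b. \<Sum>x\<in>set_pmf P. pmf P x * ln (pmf P x / pmf (Qf b) x)))"
proof -
  define M where "M x = ex B (\<lambda>b. pmf (Qf b) x)" for x
  have pm: "pmf (bind_pmf B Qf) x = M x" for x
    unfolding M_def ex_def by (simp add: pmf_bind_finite[OF finB] mult.commute)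
  have Bne: "set_pmf B \<noteq> {}" by (rule set_pmf_not_empty)
  have Mpos: "M x > 0" if x: "x \<in> set_pmf P" for x
  proof -
    obtain b where b: "b \<in> set_pmf B" using Bne by blast
    have "0 < pmf B b * pmf (Qf b) x" using b pos[OF b x] by (simp add: pmf_positive)
    also have "\<dots> \<le> M x" unfolding M_def ex_def
      by (rule member_le_sum[where f="\<lambda>b. pmf B b * pmf (Qf b) x"]) (use b finB in auto)
    finally show ?thesis .
  qed
  have jensen: "ex B (\<lambda>b. ln (pmf (Qf b) x)) \<le> ln (M x)" if x: "x \<in> set_pmf P" for x
  proof -
    have "ex B (\<lambda>b. ln (pmf (Qf b) x)) - ln (M x) = ex B (\<lambda>b. ln (pmf (Qf b) x) - ln (M x))"
      using finB by (simp add: ex_diff ex_const)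
    also have "\<dots> \<le> ex B (\<lambda>b. pmf (Qf b) x / M x - 1)"
    proof (intro ex_mono)
      fix b assume b: "b \<in> set_pmf B"
      have "ln (pmf (Qf b) x) - ln (M x) = ln (pmf (Qf b) x / M x)"
        using pos[OF b x] Mpos[OF x] by (simp add: ln_divide_pos)
      also have "\<dots> \<le> pmf (Qf b) x / M x - 1"
        using pos[OF b x] Mpos[OF x] by (intro ln_le_minus_one) auto
      finally show "ln (pmf (Qf b) x) - ln (M x) \<le> pmf (Qf b) x / M x - 1" .
    qed
    also have "\<dots> = ex B (\<lambda>b. (1 / M x) * pmf (Qf b) x) - 1"
      using finB by (simp add: ex_diff ex_const)
    also have "\<dots> = M x / M x - 1"
      by (simp only: ex_cmult M_def[symmetric]) simp
    also have "\<dots> = 0" using Mpos[OF x] by simp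
    finally show ?thesis by simp
  qed
  have nz: "\<not> (\<exists>x\<in>set_pmf P. pmf (bind_pmf B Qf) x = 0)"
    using Mpos by (auto simp: pm) (metis less_irrefl)
  have "(\<Sum>x\<in>set_pmf P. pmf P x * ln (pmf P x / pmf (bind_pmf B Qf) x))
      = (\<Sum>x\<in>set_pmf P. pmf P x * (ln (pmf P x) - ln (M x)))"
    by (intro sum.cong refl) (simp add: pm ln_divide_pos Mpos pmf_positive)
  also have "\<dots> \<le> (\<Sum>x\<in>set_pmf P. pmf P x * (ln (pmf P x) - ex B (\<lambda>b. ln (pmf (Qf b) x))))"
    by (intro sum_mono mult_left_mono) (auto simp: jensen)
  also have "\<dots> = ex B (\<lambda>b. \<Sum>x\<in>set_pmf P. pmf P x * (ln (pmf P x) - ln (pmf (Qf b) x)))"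
  proof -
    have "(\<Sum>x\<in>set_pmf P. pmf P x * (ln (pmf P x) - ex B (\<lambda>b. ln (pmf (Qf b) x)))) =
          (\<Sum>x\<in>set_pmf P. ex B (\<lambda>b. pmf P x * (ln (pmf P x) - ln (pmf (Qf b) x))))"
      using finB by (intro sum.cong refl) (simp add: ex_cmult[symmetric] ex_diff ex_const algebra_simps)
    also have "\<dots> = ex B (\<lambda>b. \<Sum>x\<in>set_pmf P. pmf P x * (ln (pmf P x) - ln (pmf (Qf b) x)))"
      by (simp add: ex_sum)
    finally show ?thesis .
  qed
  also have "\<dots> = ex B (\<lambda>b. \<Sum>x\<in>set_pmf P. pmf P x * ln (pmf P x / pmf (Qf b) x))"
    by (intro ex_cong sum.cong refl) (simp add: ln_divide_pos pos pmf_positive)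
  finally show ?thesis using nz by (simp add: pmf_KL_def)
qed




lemma Pi_pmf_map_dep:
  assumes "finite A"
  shows "Pi_pmf A d (\<lambda>i. map_pmf (f i) (P i)) = map_pmf (\<lambda>h i. if i \<in> A then f i (h i) else d) (Pi_pmf A d' P)"
proof -
  have "Pi_pmf A d (\<lambda>i. map_pmf (f i) (P i)) = Pi_pmf A d (\<lambda>i. bind_pmf (P i) (\<lambda>x. return_pmf (f i x)))"
    by (simp add: map_pmf_def)
  also have "\<dots> = bind_pmf (Pi_pmf A d' P) (\<lambda>h. Pi_pmf A d (\<lambda>i. return_pmf (f i (h i))))"
    using assms by (rule Pi_pmf_bind)
  also have "\<dots> = map_pmf (\<lambda>h i. if i \<in> A then f i (h i) else d) (Pi_pmf A d' P)"
    using assms by (simp add: map_pmf_def)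
  finally show ?thesis .
qed

lemma Pi_pmf_bind':
  assumes "finite A"
  shows "bind_pmf (Pi_pmf A d' p) (\<lambda>f. Pi_pmf A d (\<lambda>x. q x (f x))) = Pi_pmf A d (\<lambda>x. bind_pmf (p x) (q x))"
  using Pi_pmf_bind[OF assms] by metis

locale game =
  fixes N :: nat and S :: "nat \<Rightarrow> 's set" and sI :: "nat \<Rightarrow> 's"
    and A :: "nat \<Rightarrow> 'a set" and T :: "nat \<Rightarrow> 's \<Rightarrow> 'a \<Rightarrow> 's pmf"
    and \<pi> :: "(nat \<Rightarrow> 's) \<Rightarrow> (nat \<Rightarrow> 'a) pmf"
begin

abbreviation sI' where "sI' \<equiv> restrict sI {..<N}"
abbreviation JT where "JT \<equiv> joint_T N T"

primrec proc :: "(nat \<Rightarrow> ('s,'a) step list \<Rightarrow> (nat \<Rightarrow> 's) \<Rightarrow> (nat \<Rightarrow> 'a) pmf) \<Rightarrow> nat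
   \<Rightarrow> (('s,'a) step list \<times> (nat \<Rightarrow> 's)) pmf" where
  "proc \<alpha> 0 = return_pmf ([], sI')"
| "proc \<alpha> (Suc n) = bind_pmf (proc \<alpha> n) (\<lambda>(p, s). bind_pmf (\<alpha> n p s) (\<lambda>a.
      map_pmf (\<lambda>s'. (p @ [(s, a)], s')) (JT s a)))"

lemma full_prefix_st_proc: "full_prefix_st N sI T \<pi> n = proc (\<lambda>n p s. \<pi> s) n"
  by (induction n) (auto simp: full_step_def map_bind_pmf map_pmf_def[symmetric] bind_return_pmf pmf.map_comp o_def
        intro!: bind_pmf_cong split: prod.splits)

definition imag :: "nat \<Rightarrow> nat \<Rightarrow> (nat \<Rightarrow> 's) \<times> (nat \<Rightarrow> 'a) \<Rightarrow> (nat \<Rightarrow> 's) pmf" where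
  "imag n i hg = (if n = 0 then return_pmf sI'
      else Pi_pmf ({..<N} - {i}) undefined (\<lambda>j. T j (fst hg j) (snd hg j)))"

definition Wk :: "((nat \<Rightarrow> 's) \<times> (nat \<Rightarrow> 'a)) pmf \<Rightarrow> nat \<Rightarrow> nat \<Rightarrow> (nat \<Rightarrow> 's)
   \<Rightarrow> ('a \<times> (nat \<Rightarrow> 's) \<times> (nat \<Rightarrow> 'a)) pmf" where
  "Wk P i n s = bind_pmf P (\<lambda>hg. bind_pmf (imag n i hg) (\<lambda>h'.
       map_pmf (\<lambda>g'. (g' i, (h', g'))) (\<pi> (h'(i := s i)))))"

primrec filt :: "(nat \<Rightarrow> bool) \<Rightarrow> nat \<Rightarrow> nat \<Rightarrow> ('s,'a) step list \<Rightarrow> ((nat \<Rightarrow> 's) \<times> (nat \<Rightarrow> 'a)) pmf" where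
  "filt \<Lambda> i 0 p = return_pmf (sI', undefined)"
| "filt \<Lambda> i (Suc n) p = (case last p of (s, a) \<Rightarrow>
     if \<Lambda> n then return_pmf (s, a)
     else map_pmf snd (cond_pmf (Wk (filt \<Lambda> i n (butlast p)) i n s) {z. fst z = a i}))"

definition Wf where "Wf \<Lambda> i n p s = Wk (filt \<Lambda> i n p) i n s"

lemma filt_snoc: "filt \<Lambda> i (Suc n) (p @ [(s, a)]) =
   (if \<Lambda> n then return_pmf (s, a) else map_pmf snd (cond_pmf (Wf \<Lambda> i n p s) {z. fst z = a i}))"
  by (simp add: Wf_def)

definition pred where "pred \<Lambda> i n p s = map_pmf fst (Wf \<Lambda> i n p s)"

definition diag :: "(nat \<Rightarrow> 'a) \<Rightarrow> (nat \<Rightarrow> 'a)" where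
  "diag o' = (\<lambda>j. if j < N then o' j else undefined)"

definition act where
  "act \<Lambda> n p s = (if \<Lambda> n then \<pi> s
     else map_pmf diag (Pi_pmf {..<N} undefined (\<lambda>i. pred \<Lambda> i n p s)))"

primrec dflt :: "(nat \<Rightarrow> bool) \<Rightarrow> nat \<Rightarrow> ('s,'a) step list \<Rightarrow> (nat \<Rightarrow> 's) \<times> (nat \<Rightarrow> 'a)" where
  "dflt \<Lambda> 0 p = (sI', undefined)"
| "dflt \<Lambda> (Suc n) p = (if \<Lambda> n then last p else (undefined, undefined))"

definition unz :: "('s,'a) step list \<Rightarrow> (nat \<Rightarrow> 's) \<Rightarrow> (nat \<Rightarrow> (nat \<Rightarrow> 's) \<times> (nat \<Rightarrow> 'a))
   \<Rightarrow> ('s,'a) step list \<times> ((nat \<Rightarrow> 's) \<times> (nat \<Rightarrow> nat \<Rightarrow> 's) \<times> (nat \<Rightarrow> nat \<Rightarrow> 'a))" where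
  "unz p s z = (p, (s, (\<lambda>i. fst (z i)), (\<lambda>i. snd (z i))))"


lemma Wk_set: "z \<in> set_pmf (Wk P i n s) \<Longrightarrow> fst z = snd (snd z) i"
  unfolding Wk_def by auto

lemma M2_disint:
  "map_pmf snd (Wf \<Lambda> i n p s) = bind_pmf (pred \<Lambda> i n p s)
      (\<lambda>u. map_pmf snd (cond_pmf (Wf \<Lambda> i n p s) {z. fst z = u}))"
proof -
  have "map_pmf snd (Wf \<Lambda> i n p s) = map_pmf snd (bind_pmf (map_pmf fst (Wf \<Lambda> i n p s))
      (\<lambda>u. map_pmf (Pair u) (map_pmf snd (cond_pmf (Wf \<Lambda> i n p s) {z. fst z = u}))))"
    by (subst disintegrate'[of "Wf \<Lambda> i n p s"]) (rule refl)
  also have "\<dots> = bind_pmf (pred \<Lambda> i n p s)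
      (\<lambda>u. map_pmf snd (cond_pmf (Wf \<Lambda> i n p s) {z. fst z = u}))"
    by (simp add: map_bind_pmf pmf.map_comp o_def pred_def)
  finally show ?thesis .
qed

lemma C_set:
  assumes "u \<in> set_pmf (pred \<Lambda> i n p s)" "w \<in> set_pmf (map_pmf snd (cond_pmf (Wf \<Lambda> i n p s) {z. fst z = u}))"
  shows "snd w i = u"
proof -
  have ne: "set_pmf (Wf \<Lambda> i n p s) \<inter> {z. fst z = u} \<noteq> {}"
    using assms(1) by (auto simp: pred_def)
  from assms(2) obtain z where "z \<in> set_pmf (Wf \<Lambda> i n p s)" "fst z = u" "w = snd z"
    using set_cond_pmf[OF ne] by auto
  then show ?thesis using Wk_set[of z] by (auto simp: Wf_def)
qed

lemma int_step_ps:
  "bind_pmf (Pi_pmf {..<N} d (\<lambda>i. filt \<Lambda> i n p)) (\<lambda>z. map_pmf (\<lambda>(x, st'). (p @ [x], st'))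
      (int_step N sI T \<pi> (\<Lambda> n) n (s, \<lambda>i. fst (z i), \<lambda>i. snd (z i))))
   = bind_pmf (act \<Lambda> n p s) (\<lambda>a. bind_pmf (JT s a) (\<lambda>s'.
       map_pmf (unz (p @ [(s, a)]) s') (Pi_pmf {..<N} (dflt \<Lambda> (Suc n) (p @ [(s, a)]))
          (\<lambda>i. filt \<Lambda> i (Suc n) (p @ [(s, a)])))))"
proof (cases "\<Lambda> n")
  case True
  have st: "int_step N sI T \<pi> True n (s, hs, ha) = bind_pmf (\<pi> s) (\<lambda>a. bind_pmf (JT s a)
      (\<lambda>s'. return_pmf ((s, a), (s', \<lambda>i. s, \<lambda>i. a))))" for hs ha
    by (simp only: int_step_def prod.case if_True)
  have pr: "Pi_pmf {..<N} (s, a) (\<lambda>i. return_pmf (s, a)) = return_pmf (\<lambda>i. (s, a))" for a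
    by (subst Pi_pmf_return_pmf) auto
  show ?thesis using True
    by (simp del: filt.simps add: st act_def filt_snoc pr map_bind_pmf unz_def)
next
  case False
  define dd :: "(nat \<Rightarrow> 's) \<times> (nat \<Rightarrow> 'a)" where "dd = (undefined, undefined)"
  define C where "C = (\<lambda>i u. map_pmf snd (cond_pmf (Wf \<Lambda> i n p s) {z. fst z = u}))"
  define K2 where "K2 hs' ha' = map_pmf (\<lambda>(x, st'). (p @ [x], st'))
      (bind_pmf (JT s (\<lambda>i. if i < N then ha' i i else undefined)) (\<lambda>s'.
        return_pmf ((s, (\<lambda>i. if i < N then ha' i i else undefined)), (s', hs', ha'))))"
    for hs' :: "nat \<Rightarrow> nat \<Rightarrow> 's" and ha' :: "nat \<Rightarrow> nat \<Rightarrow> 'a"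
  define M where "M = (\<lambda>i. bind_pmf (filt \<Lambda> i n p) (imag n i))"
  have fA: "finite {..<N}" by simp
  have "bind_pmf (Pi_pmf {..<N} d (\<lambda>i. filt \<Lambda> i n p)) (\<lambda>z. map_pmf (\<lambda>(x, st'). (p @ [x], st'))
      (int_step N sI T \<pi> (\<Lambda> n) n (s, \<lambda>i. fst (z i), \<lambda>i. snd (z i))))
    = bind_pmf (Pi_pmf {..<N} d (\<lambda>i. filt \<Lambda> i n p)) (\<lambda>z.
        bind_pmf (Pi_pmf {..<N} undefined (\<lambda>i. imag n i (z i))) (\<lambda>hs'.
          bind_pmf (Pi_pmf {..<N} undefined (\<lambda>i. \<pi> ((hs' i)(i := s i)))) (\<lambda>ha'. K2 hs' ha')))"
    using False by (simp add: int_step_def K2_def imag_def map_bind_pmf Let_def)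
  also have "\<dots> = bind_pmf (bind_pmf (Pi_pmf {..<N} d (\<lambda>i. filt \<Lambda> i n p)) (\<lambda>z.
        Pi_pmf {..<N} undefined (\<lambda>i. imag n i (z i)))) (\<lambda>hs'.
          bind_pmf (Pi_pmf {..<N} undefined (\<lambda>i. \<pi> ((hs' i)(i := s i)))) (\<lambda>ha'. K2 hs' ha'))"
    by (simp add: bind_assoc_pmf)
  also have "\<dots> = bind_pmf (Pi_pmf {..<N} undefined M) (\<lambda>hs'.
          bind_pmf (Pi_pmf {..<N} undefined (\<lambda>i. \<pi> ((hs' i)(i := s i)))) (\<lambda>ha'. K2 hs' ha'))"
    by (simp add: Pi_pmf_bind'[OF fA] M_def)
  also have "\<dots> = bind_pmf (Pi_pmf {..<N} dd (\<lambda>i. bind_pmf (M i) (\<lambda>h'. map_pmf (Pair h') (\<pi> (h'(i := s i))))))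
      (\<lambda>w. K2 (\<lambda>i. fst (w i)) (\<lambda>i. snd (w i)))"
  proof -
    have "Pi_pmf {..<N} dd (\<lambda>i. bind_pmf (M i) (\<lambda>h'. map_pmf (Pair h') (\<pi> (h'(i := s i)))))
        = bind_pmf (Pi_pmf {..<N} undefined M) (\<lambda>hs'. Pi_pmf {..<N} dd (\<lambda>i. map_pmf (Pair (hs' i)) (\<pi> ((hs' i)(i := s i)))))"
      by (rule Pi_pmf_bind[OF fA])
    also have "\<dots> = bind_pmf (Pi_pmf {..<N} undefined M) (\<lambda>hs'. map_pmf (\<lambda>h i. if i \<in> {..<N} then (hs' i, h i) else dd)
         (Pi_pmf {..<N} undefined (\<lambda>i. \<pi> ((hs' i)(i := s i)))))"
      by (subst Pi_pmf_map_dep[OF fA, where d'=undefined]) (rule refl)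
    finally have eq: "Pi_pmf {..<N} dd (\<lambda>i. bind_pmf (M i) (\<lambda>h'. map_pmf (Pair h') (\<pi> (h'(i := s i))))) = \<dots>" .
    show ?thesis
      unfolding eq bind_assoc_pmf bind_map_pmf
    proof (intro bind_pmf_cong refl)
      fix hs' ha' assume hs': "hs' \<in> set_pmf (Pi_pmf {..<N} undefined M)"
        and ha': "ha' \<in> set_pmf (Pi_pmf {..<N} undefined (\<lambda>i. \<pi> ((hs' i)(i := s i))))"
      have hs0: "hs' \<in> {f. \<forall>x. x \<notin> {..<N} \<longrightarrow> f x = undefined}"
        by (rule subsetD[OF set_Pi_pmf_subset[OF fA] hs'])
      have ha0: "ha' \<in> {f. \<forall>x. x \<notin> {..<N} \<longrightarrow> f x = undefined}"
        by (rule subsetD[OF set_Pi_pmf_subset[OF fA] ha'])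
      have "(\<lambda>i. fst (if i \<in> {..<N} then (hs' i, ha' i) else dd)) = hs'"
      proof
        fix i show "fst (if i \<in> {..<N} then (hs' i, ha' i) else dd) = hs' i"
          using hs0 by (cases "i \<in> {..<N}") (simp_all add: dd_def)
      qed
      moreover have "(\<lambda>i. snd (if i \<in> {..<N} then (hs' i, ha' i) else dd)) = ha'"
      proof
        fix i show "snd (if i \<in> {..<N} then (hs' i, ha' i) else dd) = ha' i"
          using ha0 by (cases "i \<in> {..<N}") (simp_all add: dd_def)
      qed
      ultimately show "K2 hs' ha' = K2 (\<lambda>i. fst (if i \<in> {..<N} then (hs' i, ha' i) else dd))
                 (\<lambda>i. snd (if i \<in> {..<N} then (hs' i, ha' i) else dd))" by (simp only:)
    qed
  qed
  also have "(\<lambda>i. bind_pmf (M i) (\<lambda>h'. map_pmf (Pair h') (\<pi> (h'(i := s i))))) = (\<lambda>i. map_pmf snd (Wf \<Lambda> i n p s))"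
    by (simp add: M_def Wf_def Wk_def map_bind_pmf bind_assoc_pmf pmf.map_comp o_def)
  also have "\<dots> = (\<lambda>i. bind_pmf (pred \<Lambda> i n p s) (C i))"
    by (simp add: M2_disint C_def)
  also have "Pi_pmf {..<N} dd (\<lambda>i. bind_pmf (pred \<Lambda> i n p s) (C i))
      = bind_pmf (Pi_pmf {..<N} undefined (\<lambda>i. pred \<Lambda> i n p s)) (\<lambda>o'. Pi_pmf {..<N} dd (\<lambda>i. C i (o' i)))"
    by (rule Pi_pmf_bind[OF fA])
  also have "bind_pmf \<dots> (\<lambda>w. K2 (\<lambda>i. fst (w i)) (\<lambda>i. snd (w i)))
     = bind_pmf (Pi_pmf {..<N} undefined (\<lambda>i. pred \<Lambda> i n p s)) (\<lambda>o'.
         bind_pmf (JT s (diag o')) (\<lambda>s'. map_pmf (unz (p @ [(s, diag o')]) s') (Pi_pmf {..<N} dd (\<lambda>i. C i (o' i)))))"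
    unfolding bind_assoc_pmf
  proof (intro bind_pmf_cong refl)
    fix o' assume o': "o' \<in> set_pmf (Pi_pmf {..<N} undefined (\<lambda>i. pred \<Lambda> i n p s))"
    have eqw: "K2 (\<lambda>i. fst (w i)) (\<lambda>i. snd (w i)) = map_pmf (\<lambda>s'. unz (p @ [(s, diag o')]) s' w) (JT s (diag o'))"
      if w: "w \<in> set_pmf (Pi_pmf {..<N} dd (\<lambda>i. C i (o' i)))" for w
    proof -
      have "(\<lambda>i. if i < N then snd (w i) i else undefined) = diag o'"
      proof
        fix i show "(if i < N then snd (w i) i else undefined) = diag o' i"
        proof (cases "i < N")
          case True
          have "o' i \<in> set_pmf (pred \<Lambda> i n p s)" using o' True by (auto simp: set_Pi_pmf PiE_dflt_def)
          moreover have "w i \<in> set_pmf (C i (o' i))" using w True by (auto simp: set_Pi_pmf PiE_dflt_def)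
          ultimately show ?thesis using True C_set by (auto simp: C_def diag_def)
        qed (simp add: diag_def)
      qed
      then show ?thesis
        by (simp add: K2_def map_bind_pmf bind_return_pmf map_pmf_def[symmetric] unz_def pmf.map_comp o_def)
    qed
    have "bind_pmf (Pi_pmf {..<N} dd (\<lambda>i. C i (o' i))) (\<lambda>w. K2 (\<lambda>i. fst (w i)) (\<lambda>i. snd (w i)))
        = bind_pmf (Pi_pmf {..<N} dd (\<lambda>i. C i (o' i))) (\<lambda>w. bind_pmf (JT s (diag o')) (\<lambda>s'. return_pmf (unz (p @ [(s, diag o')]) s' w)))"
      by (intro bind_pmf_cong refl) (simp add: eqw map_pmf_def)
    also have "\<dots> = bind_pmf (JT s (diag o')) (\<lambda>s'. map_pmf (unz (p @ [(s, diag o')]) s') (Pi_pmf {..<N} dd (\<lambda>i. C i (o' i))))"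
      by (subst bind_commute_pmf) (simp add: map_pmf_def)
    finally show "bind_pmf (Pi_pmf {..<N} dd (\<lambda>i. C i (o' i))) (\<lambda>w. K2 (\<lambda>i. fst (w i)) (\<lambda>i. snd (w i))) = \<dots>" .
  qed
  also have "\<dots> = bind_pmf (act \<Lambda> n p s) (\<lambda>a. bind_pmf (JT s a) (\<lambda>s'.
       map_pmf (unz (p @ [(s, a)]) s') (Pi_pmf {..<N} (dflt \<Lambda> (Suc n) (p @ [(s, a)]))
          (\<lambda>i. filt \<Lambda> i (Suc n) (p @ [(s, a)])))))"
  proof -
    have eqC: "Pi_pmf {..<N} dd (\<lambda>i. C i (o' i)) = Pi_pmf {..<N} (dflt \<Lambda> (Suc n) (p @ [(s, diag o')]))
        (\<lambda>i. filt \<Lambda> i (Suc n) (p @ [(s, diag o')]))" for o'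
      using False by (intro Pi_pmf_cong) (auto simp del: filt.simps simp: dd_def filt_snoc C_def diag_def Wf_def)
    show ?thesis unfolding act_def using False by (simp del: filt.simps add: bind_map_pmf eqC)
  qed
  finally show ?thesis .
qed

lemma proc_Suc_bind: "bind_pmf (proc \<alpha> (Suc n)) G = bind_pmf (proc \<alpha> n) (\<lambda>(p,s).
   bind_pmf (\<alpha> n p s) (\<lambda>a. bind_pmf (JT s a) (\<lambda>s'. G (p @ [(s, a)], s'))))"
  unfolding proc.simps bind_assoc_pmf
  by (intro bind_pmf_cong refl) (simp add: split_beta bind_assoc_pmf bind_map_pmf)

lemma int_inv: "int_prefix_st N sI T \<pi> \<Lambda> n = bind_pmf (proc (act \<Lambda>) n)
   (\<lambda>(p, s). map_pmf (unz p s) (Pi_pmf {..<N} (dflt \<Lambda> n p) (\<lambda>i. filt \<Lambda> i n p)))"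
proof (induction n)
  case 0
  show ?case by (simp add: unz_def bind_return_pmf)
next
  case (Suc n)
  have "int_prefix_st N sI T \<pi> \<Lambda> (Suc n) = bind_pmf (proc (act \<Lambda>) n) (\<lambda>(p, s).
     bind_pmf (Pi_pmf {..<N} (dflt \<Lambda> n p) (\<lambda>i. filt \<Lambda> i n p)) (\<lambda>z. map_pmf (\<lambda>(x, st'). (p @ [x], st'))
      (int_step N sI T \<pi> (\<Lambda> n) n (s, \<lambda>i. fst (z i), \<lambda>i. snd (z i)))))"
    by (simp only: int_prefix_st.simps Suc.IH bind_assoc_pmf)
       (auto intro!: bind_pmf_cong simp: bind_map_pmf unz_def split: prod.splits)
  also have "\<dots> = bind_pmf (proc (act \<Lambda>) n) (\<lambda>(p, s). bind_pmf (act \<Lambda> n p s) (\<lambda>a. bind_pmf (JT s a) (\<lambda>s'.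
       map_pmf (unz (p @ [(s, a)]) s') (Pi_pmf {..<N} (dflt \<Lambda> (Suc n) (p @ [(s, a)]))
          (\<lambda>i. filt \<Lambda> i (Suc n) (p @ [(s, a)]))))))"
    by (simp add: int_step_ps)
  also have "\<dots> = bind_pmf (proc (act \<Lambda>) (Suc n))
   (\<lambda>(p, s). map_pmf (unz p s) (Pi_pmf {..<N} (dflt \<Lambda> (Suc n) p) (\<lambda>i. filt \<Lambda> i (Suc n) p)))"
    by (simp only: proc_Suc_bind case_prod_conv)
  finally show ?case .
qed


definition nxt :: "('s,'a) step list \<Rightarrow> (nat \<Rightarrow> 's) pmf" where
  "nxt p = (if p = [] then return_pmf sI' else JT (fst (last p)) (snd (last p)))"

lemma nxt_snoc[simp]: "nxt (p @ [(s, a)]) = JT s a"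
  by (simp add: nxt_def)

lemma nxt_Nil[simp]: "nxt [] = return_pmf sI'"
  by (simp add: nxt_def)

lemma map_fst_proc_Suc: "map_pmf fst (proc \<alpha> (Suc n)) =
   bind_pmf (proc \<alpha> n) (\<lambda>(p, s). map_pmf (\<lambda>a. p @ [(s, a)]) (\<alpha> n p s))"
  unfolding proc.simps map_bind_pmf
  by (intro bind_pmf_cong refl) (auto simp: map_bind_pmf pmf.map_comp o_def map_pmf_const map_pmf_def[symmetric] split: prod.splits)

lemma proc_nxt: "proc \<alpha> n = bind_pmf (map_pmf fst (proc \<alpha> n)) (\<lambda>p. map_pmf (Pair p) (nxt p))"
proof (cases n)
  case 0
  then show ?thesis by (simp add: bind_return_pmf)
next
  case (Suc m)
  show ?thesis unfolding Suc
    apply (subst map_fst_proc_Suc)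
    unfolding proc.simps bind_assoc_pmf
    by (intro bind_pmf_cong refl) (auto simp: bind_map_pmf bind_return_pmf map_pmf_def bind_assoc_pmf split: prod.splits)
qed

lemma pmf_proc: "pmf (proc \<alpha> n) (p, s) = pmf (map_pmf fst (proc \<alpha> n)) p * pmf (nxt p) s"
proof -
  have e: "pmf (map_pmf (Pair p) (nxt p)) (p, s) = pmf (nxt p) s"
    by (rule pmf_map_inj') (auto simp: inj_def)
  show ?thesis
    by (subst proc_nxt, subst pmf_bind_inj[where g=fst]) (auto simp: e)
qed

lemma pmf_proc_snoc: "pmf (map_pmf fst (proc \<alpha> (Suc n))) (p @ [(s, a)]) =
   pmf (map_pmf fst (proc \<alpha> n)) p * pmf (nxt p) s * pmf (\<alpha> n p s) a"
proof -
  have "pmf (map_pmf fst (proc \<alpha> (Suc n))) (p @ [(s, a)]) =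
     pmf (proc \<alpha> n) (p, s) * pmf (map_pmf (\<lambda>a. p @ [(s, a)]) (\<alpha> n p s)) (p @ [(s, a)])"
    unfolding map_fst_proc_Suc
    by (subst pmf_bind_inj[where g="\<lambda>x. (butlast x, fst (last x))"]) (auto simp: split_beta)
  also have "pmf (map_pmf (\<lambda>a. p @ [(s, a)]) (\<alpha> n p s)) (p @ [(s, a)]) = pmf (\<alpha> n p s) a"
    by (rule pmf_map_inj') (auto simp: inj_def)
  finally show ?thesis by (simp add: pmf_proc)
qed

lemma proc_length: "(p, s) \<in> set_pmf (proc \<alpha> n) \<Longrightarrow> length p = n"
  by (induction n arbitrary: p s) auto

lemma int_prefix_proc: "int_prefix N sI T \<pi> \<Lambda> n = map_pmf fst (proc (act \<Lambda>) n)"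
  unfolding int_prefix_def int_inv map_pmf_def bind_assoc_pmf
  by (intro bind_pmf_cong refl) (auto simp: bind_assoc_pmf bind_return_pmf unz_def split: prod.splits)

lemma full_prefix_proc: "full_prefix N sI T \<pi> n = map_pmf fst (proc (\<lambda>n p s. \<pi> s) n)"
  unfolding full_prefix_def full_prefix_st_proc ..


lemma JT_split:
  assumes "i < N"
  shows "JT s a = bind_pmf (T i (s i) (a i)) (\<lambda>x. map_pmf (\<lambda>h. h(i := x))
            (Pi_pmf ({..<N} - {i}) undefined (\<lambda>j. T j (s j) (a j))))"
proof -
  have e: "{..<N} = insert i ({..<N} - {i})" using assms by auto
  show ?thesis unfolding joint_T_def
    by (subst e, subst Pi_pmf_insert') (auto simp: map_pmf_def)
qed

lemma JT_own:
  assumes "i < N"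
  shows "bind_pmf (JT s a) (\<lambda>s'. G (s' i)) = bind_pmf (T i (s i) (a i)) G"
  by (subst JT_split[OF assms]) (simp add: bind_map_pmf bind_assoc_pmf)

lemma Wk_s: "s i = s' i \<Longrightarrow> Wk P i n s = Wk P i n s'"
  unfolding Wk_def by simp

primrec lc :: "(nat \<Rightarrow> bool) \<Rightarrow> nat \<Rightarrow> nat" where
  "lc \<Lambda> 0 = 0"
| "lc \<Lambda> (Suc n) = (if \<Lambda> n then Suc n else lc \<Lambda> n)"

lemma lc_le: "lc \<Lambda> n \<le> n"
  by (induction n) auto

definition own :: "nat \<Rightarrow> ('s,'a) step list \<Rightarrow> ('s \<times> 'a) list" where
  "own i p = map (\<lambda>(s, a). (s i, a i)) p"

definition V where "V \<Lambda> i p = (take (lc \<Lambda> (length p)) p, own i p)"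

lemma V_snoc:
  assumes "\<not> \<Lambda> (length p)" "V \<Lambda> i p = V \<Lambda> i p'" "length p = length p'"
    "s i = s' i" "a i = a' i"
  shows "V \<Lambda> i (p @ [(s, a)]) = V \<Lambda> i (p' @ [(s', a')])"
  using assms lc_le[of \<Lambda> "length p"] by (auto simp: V_def own_def)

lemma V_snocD:
  assumes "\<not> \<Lambda> (length p)" "V \<Lambda> i (p @ [(s, a)]) = V \<Lambda> i (p' @ [(s', a')])" "length p = length p'"
  shows "V \<Lambda> i p = V \<Lambda> i p'" "s i = s' i" "a i = a' i"
  using assms lc_le[of \<Lambda> "length p"] by (auto simp: V_def own_def)

lemma filt_meas:
  "length p = n \<Longrightarrow> length p' = n \<Longrightarrow> V \<Lambda> i p = V \<Lambda> i p' \<Longrightarrow> filt \<Lambda> i n p = filt \<Lambda> i n p'"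
proof (induction n arbitrary: p p')
  case 0
  then show ?case by simp
next
  case (Suc n)
  obtain p0 s a where p: "p = p0 @ [(s, a)]"
    using Suc.prems(1) by (cases p rule: rev_cases) auto
  obtain p0' s' a' where p': "p' = p0' @ [(s', a')]"
    using Suc.prems(2) by (cases p' rule: rev_cases) auto
  have l: "length p0 = n" "length p0' = n" using Suc.prems p p' by auto
  show ?case
  proof (cases "\<Lambda> n")
    case True
    then have "p = p'" using Suc.prems by (simp add: V_def)
    then show ?thesis by simp
  next
    case False
    have v: "V \<Lambda> i p0 = V \<Lambda> i p0'" "s i = s' i" "a i = a' i"
      using V_snocD[of \<Lambda> p0 i s a p0' s' a'] False Suc.prems l by (auto simp: p p')
    have "filt \<Lambda> i n p0 = filt \<Lambda> i n p0'" using Suc.IH l v by blast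
    then show ?thesis using False v by (simp del: filt.simps add: p p' filt_snoc Wf_def Wk_s[of s i s'])
  qed
qed

definition filtS where "filtS \<Lambda> i n p = bind_pmf (filt \<Lambda> i n p) (imag n i)"

abbreviation Fs where "Fs \<equiv> proc (\<lambda>n p s. \<pi> s)"


definition Eo :: "nat \<Rightarrow> 'a \<Rightarrow> nat \<Rightarrow> 'a" where "Eo i u = (\<lambda>j. if j = i then u else undefined)"

lemma bind_cond_fst:
  assumes "u \<in> set_pmf (map_pmf fst W)"
  shows "bind_pmf (cond_pmf W {z. fst z = u}) (\<lambda>z. G (fst z) (snd z)) =
         bind_pmf (map_pmf snd (cond_pmf W {z. fst z = u})) (\<lambda>y. G u y)"
proof -
  have ne: "set_pmf W \<inter> {z. fst z = u} \<noteq> {}" using assms by auto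
  show ?thesis unfolding bind_map_pmf
    by (intro bind_pmf_cong refl) (use set_cond_pmf[OF ne] in auto)
qed

lemma finv_step_pt:
  assumes i: "i < N" and nL: "\<not> \<Lambda> n" and lp: "length p = n"
    and meas: "\<And>p p' s. length p = Suc n \<Longrightarrow> length p' = Suc n \<Longrightarrow> V \<Lambda> i p = V \<Lambda> i p' \<Longrightarrow> \<Phi> p s = \<Phi> p' s"
  shows "bind_pmf (filtS \<Lambda> i n p) (\<lambda>h'. bind_pmf (\<pi> (h'(i := s i))) (\<lambda>a. bind_pmf (JT (h'(i := s i)) a)
            (\<lambda>s'. \<Phi> (p @ [(h'(i := s i), a)]) s')))
       = bind_pmf (filtS \<Lambda> i n p) (\<lambda>h'. bind_pmf (\<pi> (h'(i := s i))) (\<lambda>a. bind_pmf (JT (h'(i := s i)) a)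
            (\<lambda>s'. bind_pmf (filtS \<Lambda> i (Suc n) (p @ [(h'(i := s i), a)])) (\<lambda>h''. \<Phi> (p @ [(h'(i := s i), a)]) (h''(i := s' i))))))"
proof -
  define W where "W = Wf \<Lambda> i n p s"
  have PhiE: "\<Phi> (p @ [(h'(i := s i), a)]) x = \<Phi> (p @ [(s, Eo i (a i))]) x" for h' a x
    by (rule meas) (use lp nL in \<open>auto intro!: V_snoc simp: Eo_def\<close>)
  define R where "R u = bind_pmf (T i (s i) u) (\<lambda>x. bind_pmf (map_pmf snd (cond_pmf W {z. fst z = u}))
      (\<lambda>hg. bind_pmf (imag (Suc n) i hg) (\<lambda>h''. \<Phi> (p @ [(s, Eo i u)]) (h''(i := x)))))" for u
  define R' where "R' z = bind_pmf (T i (s i) (fst z)) (\<lambda>x. bind_pmf (imag (Suc n) i (snd z))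
      (\<lambda>h''. \<Phi> (p @ [(s, Eo i (fst z))]) (h''(i := x))))" for z
  have imagS: "Pi_pmf ({..<N} - {i}) undefined (\<lambda>j. T j (if j = i then s i else h' j) (a j)) = imag (Suc n) i (h', a)"
    for h' :: "nat \<Rightarrow> 's" and a
    unfolding imag_def fst_conv snd_conv if_not_P[OF Suc_not_Zero] by (intro Pi_pmf_cong) auto
  have A: "bind_pmf (filtS \<Lambda> i n p) (\<lambda>h'. bind_pmf (\<pi> (h'(i := s i))) (\<lambda>a. bind_pmf (JT (h'(i := s i)) a)
            (\<lambda>s'. \<Phi> (p @ [(h'(i := s i), a)]) s'))) = bind_pmf W R'"
    unfolding filtS_def W_def Wf_def Wk_def R'_def
    by (simp add: bind_assoc_pmf bind_map_pmf JT_split[OF i] imagS PhiE)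
  have B: "bind_pmf (filtS \<Lambda> i n p) (\<lambda>h'. bind_pmf (\<pi> (h'(i := s i))) (\<lambda>a. bind_pmf (JT (h'(i := s i)) a)
            (\<lambda>s'. bind_pmf (filtS \<Lambda> i (Suc n) (p @ [(h'(i := s i), a)])) (\<lambda>h''. \<Phi> (p @ [(h'(i := s i), a)]) (h''(i := s' i))))))
        = bind_pmf W (\<lambda>z. R (fst z))"
  proof -
    have e1: "filtS \<Lambda> i (Suc n) (p @ [(h'(i := s i), a)]) = bind_pmf (map_pmf snd (cond_pmf W {z. fst z = a i})) (imag (Suc n) i)"
      for h' :: "nat \<Rightarrow> 's" and a
      using nL by (simp del: filt.simps add: filtS_def filt_snoc W_def Wf_def Wk_s[of "h'(i := s i)" i s])
    have e2: "bind_pmf (JT (h'(i := s i)) a) (\<lambda>s'. bind_pmf (filtS \<Lambda> i (Suc n) (p @ [(h'(i := s i), a)]))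
              (\<lambda>h''. \<Phi> (p @ [(h'(i := s i), a)]) (h''(i := s' i)))) = R (a i)"
      for h' :: "nat \<Rightarrow> 's" and a
      unfolding e1 R_def
      by (subst JT_own[OF i, where G="\<lambda>x. bind_pmf (bind_pmf (map_pmf snd (cond_pmf W {z. fst z = a i})) (imag (Suc n) i))
              (\<lambda>h''. \<Phi> (p @ [(h'(i := s i), a)]) (h''(i := x)))"])
         (simp add: bind_assoc_pmf PhiE)
    show ?thesis
      unfolding e2 unfolding filtS_def W_def Wf_def Wk_def
      by (simp add: bind_assoc_pmf bind_map_pmf)
  qed
  have C: "bind_pmf W R' = bind_pmf W (\<lambda>z. R (fst z))"
  proof -
    have "bind_pmf W R' = bind_pmf (map_pmf fst W) (\<lambda>u. bind_pmf (cond_pmf W {z. fst z = u}) R')"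
      by (subst disintegrate[of W]) (simp add: bind_assoc_pmf)
    also have "\<dots> = bind_pmf (map_pmf fst W) R"
    proof (intro bind_pmf_cong refl)
      fix u assume u: "u \<in> set_pmf (map_pmf fst W)"
      have "bind_pmf (cond_pmf W {z. fst z = u}) R' = bind_pmf (map_pmf snd (cond_pmf W {z. fst z = u}))
         (\<lambda>y. bind_pmf (T i (s i) u) (\<lambda>x. bind_pmf (imag (Suc n) i y) (\<lambda>h''. \<Phi> (p @ [(s, Eo i u)]) (h''(i := x)))))"
        unfolding R'_def
        by (rule bind_cond_fst[OF u, where G="\<lambda>u y. bind_pmf (T i (s i) u) (\<lambda>x. bind_pmf (imag (Suc n) i y)
            (\<lambda>h''. \<Phi> (p @ [(s, Eo i u)]) (h''(i := x))))"])
      also have "\<dots> = R u"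
        unfolding R_def by (subst bind_commute_pmf) (rule refl)
      finally show "bind_pmf (cond_pmf W {z. fst z = u}) R' = R u" .
    qed
    also have "\<dots> = bind_pmf (map_pmf fst W) (\<lambda>u. bind_pmf (cond_pmf W {z. fst z = u}) (\<lambda>z. R (fst z)))"
    proof (intro bind_pmf_cong refl)
      fix u assume u: "u \<in> set_pmf (map_pmf fst W)"
      show "R u = bind_pmf (cond_pmf W {z. fst z = u}) (\<lambda>z. R (fst z))"
        using bind_cond_fst[OF u, where G="\<lambda>u y. R u"] by simp
    qed
    also have "\<dots> = bind_pmf W (\<lambda>z. R (fst z))"
      by (subst (2) disintegrate[of W]) (simp add: bind_assoc_pmf)
    finally show ?thesis .
  qed
  show ?thesis using A B C by simp
qed


lemma finv:
  assumes i: "i < N"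
    and meas: "\<And>p p' s. length p = n \<Longrightarrow> length p' = n \<Longrightarrow> V \<Lambda> i p = V \<Lambda> i p' \<Longrightarrow> \<Phi> p s = \<Phi> p' s"
  shows "bind_pmf (Fs n) (\<lambda>(p, s). \<Phi> p s) =
         bind_pmf (Fs n) (\<lambda>(p, s). bind_pmf (filtS \<Lambda> i n p) (\<lambda>h'. \<Phi> p (h'(i := s i))))"
  using meas
proof (induction n arbitrary: \<Phi>)
  case 0
  have e: "sI'(i := sI' i) = sI'" by (rule fun_upd_triv)
  show ?case by (simp only: proc.simps bind_return_pmf filtS_def imag_def filt.simps if_True e case_prod_conv simp_thms)
next
  case (Suc n)
  note meas = Suc.prems
  have L: "bind_pmf (Fs (Suc n)) (\<lambda>(p, s). \<Phi> p s) = bind_pmf (Fs n) (\<lambda>(p, s).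
     bind_pmf (\<pi> s) (\<lambda>a. bind_pmf (JT s a) (\<lambda>s'. \<Phi> (p @ [(s, a)]) s')))"
    by (simp only: proc_Suc_bind case_prod_conv)
  have R: "bind_pmf (Fs (Suc n)) (\<lambda>(p, s). bind_pmf (filtS \<Lambda> i (Suc n) p) (\<lambda>h'. \<Phi> p (h'(i := s i))))
     = bind_pmf (Fs n) (\<lambda>(p, s). bind_pmf (\<pi> s) (\<lambda>a. bind_pmf (JT s a) (\<lambda>s'.
         bind_pmf (filtS \<Lambda> i (Suc n) (p @ [(s, a)])) (\<lambda>h'. \<Phi> (p @ [(s, a)]) (h'(i := s' i))))))"
    by (simp only: proc_Suc_bind case_prod_conv)
  show ?case
  proof (cases "\<Lambda> n")
    case True
    have "bind_pmf (JT s a) (\<lambda>s'. \<Phi> (p @ [(s, a)]) s') = bind_pmf (JT s a) (\<lambda>s'.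
         bind_pmf (filtS \<Lambda> i (Suc n) (p @ [(s, a)])) (\<lambda>h'. \<Phi> (p @ [(s, a)]) (h'(i := s' i))))" for p s a
      using True by (simp del: filt.simps add: filtS_def filt_snoc imag_def JT_split[OF i] bind_map_pmf bind_assoc_pmf bind_return_pmf)
    then show ?thesis unfolding L R by simp
  next
    case False
    define \<Phi>1 where "\<Phi>1 p s = bind_pmf (\<pi> s) (\<lambda>a. bind_pmf (JT s a) (\<lambda>s'. \<Phi> (p @ [(s, a)]) s'))" for p s
    define \<Phi>2 where "\<Phi>2 p s = bind_pmf (\<pi> s) (\<lambda>a. bind_pmf (JT s a) (\<lambda>s'.
         bind_pmf (filtS \<Lambda> i (Suc n) (p @ [(s, a)])) (\<lambda>h'. \<Phi> (p @ [(s, a)]) (h'(i := s' i)))))" for p s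
    have vs: "V \<Lambda> i (p @ [(s, a)]) = V \<Lambda> i (p' @ [(s, a)])"
      if "length p = n" "length p' = n" "V \<Lambda> i p = V \<Lambda> i p'" for p p' s a
      using that False by (intro V_snoc) auto
    have m1: "\<Phi>1 p s = \<Phi>1 p' s" if "length p = n" "length p' = n" "V \<Lambda> i p = V \<Lambda> i p'" for p p' s
    proof -
      have "\<Phi> (p @ [(s, a)]) = \<Phi> (p' @ [(s, a)])" for a
        using meas[of "p @ [(s, a)]" "p' @ [(s, a)]"] vs[OF that] that by (intro ext) simp
      then show ?thesis unfolding \<Phi>1_def by simp
    qed
    have fm: "filtS \<Lambda> i (Suc n) (p @ [(s, a)]) = filtS \<Lambda> i (Suc n) (p' @ [(s, a)])"
      if "length p = n" "length p' = n" "V \<Lambda> i p = V \<Lambda> i p'" for p p' s a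
      unfolding filtS_def using filt_meas[of "p @ [(s, a)]" "Suc n" "p' @ [(s, a)]" \<Lambda> i] vs[OF that] that by simp
    have m2: "\<Phi>2 p s = \<Phi>2 p' s" if "length p = n" "length p' = n" "V \<Lambda> i p = V \<Lambda> i p'" for p p' s
    proof -
      have "\<Phi> (p @ [(s, a)]) = \<Phi> (p' @ [(s, a)])" for a
        using meas[of "p @ [(s, a)]" "p' @ [(s, a)]"] vs[OF that] that by (intro ext) simp
      then show ?thesis unfolding \<Phi>2_def using fm[OF that] by simp
    qed
    have "bind_pmf (Fs n) (\<lambda>(p, s). \<Phi>1 p s) = bind_pmf (Fs n) (\<lambda>(p, s). bind_pmf (filtS \<Lambda> i n p) (\<lambda>h'. \<Phi>1 p (h'(i := s i))))"
      by (rule Suc.IH) (rule m1)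
    also have "\<dots> = bind_pmf (Fs n) (\<lambda>(p, s). bind_pmf (filtS \<Lambda> i n p) (\<lambda>h'. \<Phi>2 p (h'(i := s i))))"
    proof (intro bind_pmf_cong refl, clarify)
      fix p s assume ps: "(p, s) \<in> set_pmf (Fs n)"
      then have lp: "length p = n" by (rule proc_length)
      show "bind_pmf (filtS \<Lambda> i n p) (\<lambda>h'. \<Phi>1 p (h'(i := s i))) = bind_pmf (filtS \<Lambda> i n p) (\<lambda>h'. \<Phi>2 p (h'(i := s i)))"
        unfolding \<Phi>1_def \<Phi>2_def by (rule finv_step_pt[where \<Phi>=\<Phi> and s=s and i=i and \<Lambda>=\<Lambda> and n=n and p=p, OF i False lp meas])
    qed
    also have "\<dots> = bind_pmf (Fs n) (\<lambda>(p, s). \<Phi>2 p s)"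
      by (rule Suc.IH[symmetric]) (rule m2)
    finally show ?thesis unfolding L R \<Phi>1_def \<Phi>2_def .
  qed
qed


lemma F_take: "m \<le> n \<Longrightarrow> map_pmf (take m) (map_pmf fst (proc \<alpha> n)) = map_pmf fst (proc \<alpha> m)"
proof (induction n)
  case 0
  then show ?case by simp
next
  case (Suc n)
  show ?case
  proof (cases "m = Suc n")
    case True
    have "map_pmf (take m) (map_pmf fst (proc \<alpha> (Suc n))) = map_pmf (\<lambda>x. x) (map_pmf fst (proc \<alpha> (Suc n)))"
      by (intro map_pmf_cong refl) (auto simp del: proc.simps simp: True dest: proc_length)
    then show ?thesis using True by simp
  next
    case False
    then have m: "m \<le> n" using Suc.prems by simp
    have "map_pmf (take m) (map_pmf fst (proc \<alpha> (Suc n))) = bind_pmf (proc \<alpha> n) (\<lambda>x. return_pmf (take m (fst x)))"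
      unfolding map_fst_proc_Suc map_bind_pmf
    proof (intro bind_pmf_cong refl)
      fix x assume x: "x \<in> set_pmf (proc \<alpha> n)"
      obtain p s where ps: "x = (p, s)" by (cases x)
      have "length p = n" using x ps by (auto intro: proc_length)
      then have tk: "take m (p @ [y]) = take m p" for y using m by simp
      show "map_pmf (take m) (case x of (p, s) \<Rightarrow> map_pmf (\<lambda>a. p @ [(s, a)]) (\<alpha> n p s)) =
          return_pmf (take m (fst x))"
        by (simp add: ps pmf.map_comp o_def tk map_pmf_const del: take_append)
    qed
    also have "\<dots> = map_pmf (take m) (map_pmf fst (proc \<alpha> n))"
      by (simp add: map_pmf_def bind_assoc_pmf bind_return_pmf)
    finally have "map_pmf (take m) (map_pmf fst (proc \<alpha> (Suc n))) = map_pmf (take m) (map_pmf fst (proc \<alpha> n))" .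
    then show ?thesis using Suc.IH m by simp
  qed
qed

definition Gv where "Gv \<Lambda> i t p = (V \<Lambda> i (take t p), fst (p ! t) i)"
definition gv where "gv i t p = snd (p ! t) i"
definition cv where "cv \<Lambda> i t p = pred \<Lambda> i t (take t p) (fst (p ! t))"

lemma pred_alt: "pred \<Lambda> i n p s = bind_pmf (filtS \<Lambda> i n p) (\<lambda>h'. map_pmf (\<lambda>a. a i) (\<pi> (h'(i := s i))))"
  unfolding pred_def Wf_def Wk_def filtS_def by (simp add: map_bind_pmf bind_assoc_pmf pmf.map_comp o_def)

lemma disint_agent_Suc:
  assumes i: "i < N"
  shows "map_pmf (\<lambda>p. (Gv \<Lambda> i t p, gv i t p)) (map_pmf fst (Fs (Suc t))) =
         bind_pmf (map_pmf fst (Fs (Suc t))) (\<lambda>p. map_pmf (Pair (Gv \<Lambda> i t p)) (cv \<Lambda> i t p))"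
proof -
  have L: "map_pmf (\<lambda>p. (Gv \<Lambda> i t p, gv i t p)) (map_pmf fst (Fs (Suc t))) =
      bind_pmf (Fs t) (\<lambda>(p, s). map_pmf (\<lambda>a. ((V \<Lambda> i p, s i), a i)) (\<pi> s))"
    unfolding map_fst_proc_Suc map_bind_pmf
    by (intro bind_pmf_cong refl) (auto simp: pmf.map_comp o_def Gv_def gv_def dest!: proc_length)
  have R: "bind_pmf (map_pmf fst (Fs (Suc t))) (\<lambda>p. map_pmf (Pair (Gv \<Lambda> i t p)) (cv \<Lambda> i t p)) =
      bind_pmf (Fs t) (\<lambda>(p, s). map_pmf (Pair (V \<Lambda> i p, s i)) (pred \<Lambda> i t p s))"
    unfolding map_fst_proc_Suc bind_assoc_pmf bind_map_pmf
    by (intro bind_pmf_cong refl) (auto simp: Gv_def cv_def bind_map_pmf nth_append dest!: proc_length)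
  have "bind_pmf (Fs t) (\<lambda>(p, s). map_pmf (\<lambda>a. ((V \<Lambda> i p, s i), a i)) (\<pi> s)) =
        bind_pmf (Fs t) (\<lambda>(p, s). bind_pmf (filtS \<Lambda> i t p) (\<lambda>h'. map_pmf (\<lambda>a. ((V \<Lambda> i p, (h'(i := s i)) i), a i)) (\<pi> (h'(i := s i)))))"
    by (rule finv[OF i, where \<Phi>="\<lambda>p s. map_pmf (\<lambda>a. ((V \<Lambda> i p, s i), a i)) (\<pi> s)"]) simp
  also have "\<dots> = bind_pmf (Fs t) (\<lambda>(p, s). map_pmf (Pair (V \<Lambda> i p, s i)) (pred \<Lambda> i t p s))"
    by (simp add: pred_alt map_bind_pmf pmf.map_comp o_def)
  finally show ?thesis using L R by simp
qed

lemma disint_agent: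
  assumes i: "i < N" and tn: "t < n"
  shows "map_pmf (\<lambda>p. (Gv \<Lambda> i t p, gv i t p)) (map_pmf fst (Fs n)) =
         bind_pmf (map_pmf fst (Fs n)) (\<lambda>p. map_pmf (Pair (Gv \<Lambda> i t p)) (cv \<Lambda> i t p))"
proof -
  have tk: "Gv \<Lambda> i t (take (Suc t) p) = Gv \<Lambda> i t p" "gv i t (take (Suc t) p) = gv i t p"
       "cv \<Lambda> i t (take (Suc t) p) = cv \<Lambda> i t p" if "length p = n" for p
    using that tn by (auto simp: Gv_def gv_def cv_def min_def)
  have "map_pmf (\<lambda>p. (Gv \<Lambda> i t p, gv i t p)) (map_pmf fst (Fs n)) =
        map_pmf (\<lambda>p. (Gv \<Lambda> i t p, gv i t p)) (map_pmf (take (Suc t)) (map_pmf fst (Fs n)))"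
    unfolding pmf.map_comp o_def by (intro map_pmf_cong refl) (auto simp: tk dest: proc_length)
  also have "\<dots> = bind_pmf (map_pmf (take (Suc t)) (map_pmf fst (Fs n))) (\<lambda>p. map_pmf (Pair (Gv \<Lambda> i t p)) (cv \<Lambda> i t p))"
  proof -
    have st: "Suc t \<le> n" using tn by simp
    show ?thesis by (simp only: F_take[OF st]) (rule disint_agent_Suc[OF i])
  qed
  also have "\<dots> = bind_pmf (map_pmf fst (Fs n)) (\<lambda>p. map_pmf (Pair (Gv \<Lambda> i t p)) (cv \<Lambda> i t p))"
    unfolding bind_map_pmf by (intro bind_pmf_cong refl) (auto simp: tk dest: proc_length)
  finally show ?thesis .
qed


lemma disint_pi:
  assumes tn: "t < n"
  shows "map_pmf (\<lambda>p. ((take t p, fst (p ! t)), snd (p ! t))) (map_pmf fst (Fs n)) =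
         bind_pmf (map_pmf fst (Fs n)) (\<lambda>p. map_pmf (Pair (take t p, fst (p ! t))) (\<pi> (fst (p ! t))))"
proof -
  have tk: "take t (take (Suc t) p) = take t p" "take (Suc t) p ! t = p ! t" if "length p = n" for p :: "('s,'a) step list"
    using that tn by (auto simp: min_def)
  have suc: "map_pmf (\<lambda>p. ((take t p, fst (p ! t)), snd (p ! t))) (map_pmf fst (Fs (Suc t))) =
         bind_pmf (map_pmf fst (Fs (Suc t))) (\<lambda>p. map_pmf (Pair (take t p, fst (p ! t))) (\<pi> (fst (p ! t))))"
  proof -
    have "map_pmf (\<lambda>p. ((take t p, fst (p ! t)), snd (p ! t))) (map_pmf fst (Fs (Suc t))) =
      bind_pmf (Fs t) (\<lambda>(p, s). map_pmf (\<lambda>a. ((p, s), a)) (\<pi> s))"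
      unfolding map_fst_proc_Suc map_bind_pmf
      by (intro bind_pmf_cong refl) (auto simp: pmf.map_comp o_def dest!: proc_length)
    also have "\<dots> = bind_pmf (map_pmf fst (Fs (Suc t))) (\<lambda>p. map_pmf (Pair (take t p, fst (p ! t))) (\<pi> (fst (p ! t))))"
      unfolding map_fst_proc_Suc bind_assoc_pmf bind_map_pmf
      by (intro bind_pmf_cong refl) (auto simp: bind_map_pmf nth_append map_pmf_def bind_assoc_pmf bind_return_pmf dest!: proc_length)
    finally show ?thesis .
  qed
  have st: "Suc t \<le> n" using tn by simp
  have "map_pmf (\<lambda>p. ((take t p, fst (p ! t)), snd (p ! t))) (map_pmf fst (Fs n)) =
        map_pmf (\<lambda>p. ((take t p, fst (p ! t)), snd (p ! t))) (map_pmf (take (Suc t)) (map_pmf fst (Fs n)))"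
    unfolding pmf.map_comp o_def by (intro map_pmf_cong refl) (auto simp: tk dest: proc_length)
  also have "\<dots> = bind_pmf (map_pmf (take (Suc t)) (map_pmf fst (Fs n))) (\<lambda>p. map_pmf (Pair (take t p, fst (p ! t))) (\<pi> (fst (p ! t))))"
    by (simp only: F_take[OF st]) (rule suc)
  also have "\<dots> = bind_pmf (map_pmf fst (Fs n)) (\<lambda>p. map_pmf (Pair (take t p, fst (p ! t))) (\<pi> (fst (p ! t))))"
    unfolding bind_map_pmf by (intro bind_pmf_cong refl) (auto simp: tk dest: proc_length)
  finally show ?thesis .
qed

end

locale wgame = game +
  assumes wf: "wf_game N S sI A T \<pi>"
begin

lemma finS: "i < N \<Longrightarrow> finite (S i)" and sIS: "i < N \<Longrightarrow> sI i \<in> S i"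
  and finA: "i < N \<Longrightarrow> finite (A i)"
  and Tsupp: "i < N \<Longrightarrow> x \<in> S i \<Longrightarrow> b \<in> A i \<Longrightarrow> set_pmf (T i x b) \<subseteq> S i"
  using wf unfolding wf_game_def by blast+

lemma pisupp: "s \<in> PiE {..<N} S \<Longrightarrow> set_pmf (\<pi> s) \<subseteq> PiE {..<N} A"
  using wf unfolding wf_game_def by blast

lemma JT_supp:
  assumes "s \<in> PiE {..<N} S" "a \<in> PiE {..<N} A"
  shows "set_pmf (JT s a) \<subseteq> PiE {..<N} S"
proof
  fix s' assume s': "s' \<in> set_pmf (JT s a)"
  have "s' \<in> PiE_dflt {..<N} undefined (set_pmf \<circ> (\<lambda>i. T i (s i) (a i)))"
    using s' set_Pi_pmf_subset'[of "{..<N}" undefined "\<lambda>i. T i (s i) (a i)"] by (auto simp: joint_T_def)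
  then show "s' \<in> PiE {..<N} S"
    using assms Tsupp by (fastforce simp: PiE_dflt_def PiE_def extensional_def)
qed

definition good where
  "good p s \<longleftrightarrow> s \<in> PiE {..<N} S \<and> (\<forall>x\<in>set p. fst x \<in> PiE {..<N} S \<and> snd x \<in> PiE {..<N} A)"

lemma Fs_good: "(p, s) \<in> set_pmf (Fs n) \<Longrightarrow> good p s"
proof (induction n arbitrary: p s)
  case 0
  then show ?case using sIS by (auto simp: good_def split: if_splits)
next
  case (Suc n)
  then obtain p0 s0 a where ps: "(p0, s0) \<in> set_pmf (Fs n)" "a \<in> set_pmf (\<pi> s0)" "p = p0 @ [(s0, a)]"
    "s \<in> set_pmf (JT s0 a)" by auto
  have g: "good p0 s0" using Suc.IH ps by blast
  then have a: "a \<in> PiE {..<N} A" using pisupp ps by (auto simp: good_def)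
  show ?case using g a ps JT_supp[of s0 a] by (auto simp: good_def)
qed

lemma fin_PiE_S: "finite (PiE {..<N} S)" using finS by (intro finite_PiE) auto
lemma fin_PiE_A: "finite (PiE {..<N} A)" using finA by (intro finite_PiE) auto

lemma Fs_fin: "finite (set_pmf (Fs n))"
proof (induction n)
  case 0
  then show ?case by simp
next
  case (Suc n)
  have "set_pmf (Fs (Suc n)) = (\<Union>x\<in>set_pmf (Fs n). \<Union>a\<in>set_pmf (\<pi> (snd x)).
          (\<lambda>s'. (fst x @ [(snd x, a)], s')) ` set_pmf (JT (snd x) a))"
    by (auto simp: split_beta)
  moreover have "finite \<dots>"
  proof (intro finite_UN_I finite_imageI)
    fix x a assume x: "x \<in> set_pmf (Fs n)" and a: "a \<in> set_pmf (\<pi> (snd x))"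
    have g: "good (fst x) (snd x)" using Fs_good[of "fst x" "snd x" n] x by simp
    then have "set_pmf (\<pi> (snd x)) \<subseteq> PiE {..<N} A" using pisupp by (auto simp: good_def)
    then have aA: "a \<in> PiE {..<N} A" using a by auto
    show "finite (set_pmf (JT (snd x) a))"
      using JT_supp[of "snd x" a] g aA fin_PiE_S by (auto simp: good_def intro: finite_subset)
  next
    fix x assume x: "x \<in> set_pmf (Fs n)"
    have g: "good (fst x) (snd x)" using Fs_good[of "fst x" "snd x" n] x by simp
    then show "finite (set_pmf (\<pi> (snd x)))"
      using pisupp fin_PiE_A by (auto simp: good_def intro: finite_subset)
  qed (use Suc.IH in simp)
  ultimately show ?case by simp
qed

lemma F_fin: "finite (set_pmf (map_pmf fst (Fs n)))"
  using Fs_fin by simp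


declare proc.simps(2)[simp del]

abbreviation F where "F n \<equiv> map_pmf fst (Fs n)"
abbreviation Q where "Q \<Lambda> n \<equiv> map_pmf fst (proc (act \<Lambda>) n)"

lemma F_supp_snoc:
  assumes "p0 @ [(s, a)] \<in> set_pmf (F (Suc n))"
  shows "(p0, s) \<in> set_pmf (Fs n)" "a \<in> set_pmf (\<pi> s)"
  using assms unfolding map_fst_proc_Suc by auto

lemma F_supp_take:
  assumes "p \<in> set_pmf (F n)" "m \<le> n"
  shows "take m p \<in> set_pmf (F m)"
proof -
  have "take m p \<in> set_pmf (map_pmf (take m) (F n))" using assms by auto
  then show ?thesis by (simp only: F_take[OF assms(2)])
qed

lemma F_len: "p \<in> set_pmf (F n) \<Longrightarrow> length p = n"
  by (auto dest: proc_length)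

lemma F_good: "p \<in> set_pmf (F n) \<Longrightarrow> x \<in> set p \<Longrightarrow> fst x \<in> PiE {..<N} S \<and> snd x \<in> PiE {..<N} A"
  using Fs_good by (force simp: good_def)

lemma F_step:
  assumes p: "p \<in> set_pmf (F n)" and t: "t < n"
  shows "take (Suc t) p = take t p @ [(fst (p ! t), snd (p ! t))]"
    "(take t p, fst (p ! t)) \<in> set_pmf (Fs t)" "snd (p ! t) \<in> set_pmf (\<pi> (fst (p ! t)))"
proof -
  have l: "length p = n" using p by (rule F_len)
  show tk: "take (Suc t) p = take t p @ [(fst (p ! t), snd (p ! t))]"
    using l t by (simp add: take_Suc_conv_app_nth)
  have "take (Suc t) p \<in> set_pmf (F (Suc t))" using p t by (intro F_supp_take) auto
  then have m: "take t p @ [(fst (p ! t), snd (p ! t))] \<in> set_pmf (F (Suc t))" using tk by simp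
  show "(take t p, fst (p ! t)) \<in> set_pmf (Fs t)" by (rule F_supp_snoc(1)[OF m])
  show "snd (p ! t) \<in> set_pmf (\<pi> (fst (p ! t)))" by (rule F_supp_snoc(2)[OF m])
qed

lemma cv_meas:
  assumes p: "p \<in> set_pmf (F n)" and p': "p' \<in> set_pmf (F n)" and t: "t < n"
    and G: "Gv \<Lambda> i t p = Gv \<Lambda> i t p'"
  shows "cv \<Lambda> i t p = cv \<Lambda> i t p'"
proof -
  have l: "length (take t p) = t" "length (take t p') = t" using F_len[OF p] F_len[OF p'] t by auto
  have v: "V \<Lambda> i (take t p) = V \<Lambda> i (take t p')" and si: "fst (p ! t) i = fst (p' ! t) i"
    using G by (auto simp: Gv_def)
  have "filt \<Lambda> i t (take t p) = filt \<Lambda> i t (take t p')" by (rule filt_meas[OF l v])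
  then show ?thesis using Wk_s[of "fst (p ! t)" i "fst (p' ! t)", OF si] by (simp add: cv_def pred_def Wf_def)
qed

lemma cv0_meas:
  assumes p: "p \<in> set_pmf (F n)" and p': "p' \<in> set_pmf (F n)" and t: "t < n"
    and G: "Gv \<Lambda> i t p = Gv \<Lambda> i t p'"
  shows "cv (\<lambda>_. False) i t p = cv (\<lambda>_. False) i t p'"
proof (rule cv_meas[OF p p' t])
  have l: "lc (\<lambda>_. False) m = 0" for m by (induction m) auto
  show "Gv (\<lambda>_. False) i t p = Gv (\<lambda>_. False) i t p'"
    using G by (simp add: Gv_def V_def l)
qed

lemma cv_pos:
  assumes p: "p \<in> set_pmf (F n)" and t: "t < n" and i: "i < N"
  shows "pmf (cv \<Lambda> i t p) (gv i t p) > 0"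
  by (rule disint_pos[OF disint_agent[OF i t] _ p]) (rule cv_meas, auto simp: t)

lemma act_prod:
  assumes p: "p \<in> set_pmf (F n)" and t: "t < n" and nL: "\<not> \<Lambda> t"
  shows "pmf (act \<Lambda> t (take t p) (fst (p ! t))) (snd (p ! t)) = (\<Prod>i<N. pmf (cv \<Lambda> i t p) (gv i t p))"
proof -
  have mem: "p ! t \<in> set p" using F_len[OF p] t by simp
  have aA: "snd (p ! t) \<in> PiE {..<N} A" using F_good[OF p mem] by simp
  have "map_pmf diag (Pi_pmf {..<N} undefined (\<lambda>i. pred \<Lambda> i t (take t p) (fst (p ! t)))) =
        Pi_pmf {..<N} undefined (\<lambda>i. pred \<Lambda> i t (take t p) (fst (p ! t)))"
    by (rule map_pmf_idI) (use set_Pi_pmf_subset[of "{..<N}" undefined] in \<open>force simp: diag_def\<close>)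
  then have "act \<Lambda> t (take t p) (fst (p ! t)) = Pi_pmf {..<N} undefined (\<lambda>i. pred \<Lambda> i t (take t p) (fst (p ! t)))"
    using nL by (simp add: act_def)
  then have "pmf (act \<Lambda> t (take t p) (fst (p ! t))) (snd (p ! t)) =
      pmf (Pi_pmf {..<N} undefined (\<lambda>i. pred \<Lambda> i t (take t p) (fst (p ! t)))) (snd (p ! t))" by simp
  also have "\<dots> = (\<Prod>i<N. pmf (pred \<Lambda> i t (take t p) (fst (p ! t))) (snd (p ! t) i))"
    using aA by (intro pmf_Pi') (auto simp: PiE_def extensional_def)
  finally show ?thesis by (simp add: cv_def gv_def)
qed

lemma act_pos:
  assumes p: "p \<in> set_pmf (F n)" and t: "t < n"
  shows "pmf (act \<Lambda> t (take t p) (fst (p ! t))) (snd (p ! t)) > 0"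
proof (cases "\<Lambda> t")
  case True
  then show ?thesis using F_step(3)[OF p t] by (simp add: act_def pmf_positive)
next
  case False
  then show ?thesis using act_prod[where \<Lambda>=\<Lambda>, OF p t False] cv_pos[OF p t] by (auto intro!: prod_pos)
qed

definition ell where
  "ell \<Lambda> t p = ln (pmf (\<pi> (fst (p ! t))) (snd (p ! t))) - ln (pmf (act \<Lambda> t (take t p) (fst (p ! t))) (snd (p ! t)))"

lemma lr:
  "p \<in> set_pmf (F n) \<Longrightarrow> pmf (Q \<Lambda> n) p > 0 \<and> ln (pmf (F n) p) - ln (pmf (Q \<Lambda> n) p) = (\<Sum>t<n. ell \<Lambda> t p)"
proof (induction n arbitrary: p)
  case 0
  then show ?case by simp
next
  case (Suc n)
  have l: "length p = Suc n" using Suc.prems by (rule F_len)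
  obtain p0 s a where pe: "p = p0 @ [(s, a)]" using l by (cases p rule: rev_cases) auto
  have ps: "(p0, s) \<in> set_pmf (Fs n)" "a \<in> set_pmf (\<pi> s)"
    using F_supp_snoc[of p0 s a n] Suc.prems unfolding pe by blast+
  have lp0: "length p0 = n" using l pe by simp
  have p0: "p0 \<in> set_pmf (F n)" using ps(1) by (simp add: image_iff) (metis fst_conv)
  have IH: "pmf (Q \<Lambda> n) p0 > 0" "ln (pmf (F n) p0) - ln (pmf (Q \<Lambda> n) p0) = (\<Sum>t<n. ell \<Lambda> t p0)"
    using Suc.IH[OF p0] by auto
  have fpos: "pmf (F n) p0 * pmf (nxt p0) s > 0" using ps(1) by (simp add: pmf_proc[symmetric] pmf_positive)
  then have f1: "pmf (F n) p0 > 0" "pmf (nxt p0) s > 0" by (auto simp: zero_less_mult_iff pmf_nonneg)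
  have f2: "pmf (\<pi> s) a > 0" using ps(2) by (simp add: pmf_positive)
  have apos: "pmf (act \<Lambda> n p0 s) a > 0"
    using act_pos[OF Suc.prems, of n \<Lambda>] pe lp0 by (simp add: nth_append)
  have F: "pmf (F (Suc n)) p = pmf (F n) p0 * pmf (nxt p0) s * pmf (\<pi> s) a"
    unfolding pe by (rule pmf_proc_snoc)
  have Qe: "pmf (Q \<Lambda> (Suc n)) p = pmf (Q \<Lambda> n) p0 * pmf (nxt p0) s * pmf (act \<Lambda> n p0 s) a"
    unfolding pe by (rule pmf_proc_snoc)
  have ell_pre: "ell \<Lambda> t p = ell \<Lambda> t p0" if "t < n" for t
    using that lp0 by (simp add: pe ell_def nth_append)
  have ell_last: "ell \<Lambda> n p = ln (pmf (\<pi> s) a) - ln (pmf (act \<Lambda> n p0 s) a)"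
    using lp0 by (simp add: pe ell_def nth_append)
  have "ln (pmf (F (Suc n)) p) - ln (pmf (Q \<Lambda> (Suc n)) p) =
     (ln (pmf (F n) p0) - ln (pmf (Q \<Lambda> n) p0)) + (ln (pmf (\<pi> s) a) - ln (pmf (act \<Lambda> n p0 s) a))"
  proof -
    have e1: "ln (pmf (F (Suc n)) p) = ln (pmf (F n) p0) + ln (pmf (nxt p0) s) + ln (pmf (\<pi> s) a)"
      unfolding F using ln_mult_pos[OF mult_pos_pos[OF f1(1) f1(2)] f2] ln_mult_pos[OF f1(1) f1(2)] by simp
    have e2: "ln (pmf (Q \<Lambda> (Suc n)) p) = ln (pmf (Q \<Lambda> n) p0) + ln (pmf (nxt p0) s) + ln (pmf (act \<Lambda> n p0 s) a)"
      unfolding Qe using ln_mult_pos[OF mult_pos_pos[OF IH(1) f1(2)] apos] ln_mult_pos[OF IH(1) f1(2)] by simp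
    show ?thesis unfolding e1 e2 by simp
  qed
  also have "\<dots> = (\<Sum>t<Suc n. ell \<Lambda> t p)"
    using IH(2) ell_pre ell_last by simp
  finally show ?case unfolding Qe using IH(1) f1 apos by simp
qed

lemma KL_formula:
  "pmf_KL (F n) (Q \<Lambda> n) = ereal (\<Sum>t<n. ex (F n) (ell \<Lambda> t))"
proof -
  have nz: "\<not> (\<exists>x\<in>set_pmf (F n). pmf (Q \<Lambda> n) x = 0)"
  proof
    assume "\<exists>x\<in>set_pmf (F n). pmf (Q \<Lambda> n) x = 0"
    then obtain x where "x \<in> set_pmf (F n)" "pmf (Q \<Lambda> n) x = 0" by blast
    with lr[OF this(1), of \<Lambda>] show False by simp
  qed
  have "(\<Sum>x\<in>set_pmf (F n). pmf (F n) x * ln (pmf (F n) x / pmf (Q \<Lambda> n) x)) =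
        ex (F n) (\<lambda>p. \<Sum>t<n. ell \<Lambda> t p)"
    unfolding ex_def
  proof (intro sum.cong refl)
    fix x assume x: "x \<in> set_pmf (F n)"
    have "pmf (F n) x > 0" using x by (simp add: pmf_positive)
    then show "pmf (F n) x * ln (pmf (F n) x / pmf (Q \<Lambda> n) x) = pmf (F n) x * (\<Sum>t<n. ell \<Lambda> t x)"
      using lr[OF x, of \<Lambda>] by (simp add: ln_divide_pos)
  qed
  then show ?thesis using nz by (simp add: pmf_KL_def ex_sum)
qed


abbreviation L0 :: "nat \<Rightarrow> bool" where "L0 \<equiv> (\<lambda>_. False)"

lemma ell_comm: "\<Lambda> t \<Longrightarrow> ell \<Lambda> t p = 0"
  by (simp add: ell_def act_def)

lemma ell_noncomm:
  assumes p: "p \<in> set_pmf (F n)" and t: "t < n" and nL: "\<not> \<Lambda> t"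
  shows "ell \<Lambda> t p = ln (pmf (\<pi> (fst (p ! t))) (snd (p ! t))) - (\<Sum>i<N. ln (pmf (cv \<Lambda> i t p) (gv i t p)))"
proof -
  have "ln (\<Prod>i<N. pmf (cv \<Lambda> i t p) (gv i t p)) = (\<Sum>i<N. ln (pmf (cv \<Lambda> i t p) (gv i t p)))"
    by (rule ln_prod) (use cv_pos[OF p t] in \<open>auto simp: less_imp_neq[symmetric]\<close>)
  then show ?thesis by (simp add: ell_def act_prod[where \<Lambda>=\<Lambda>, OF p t nL])
qed

lemma ex_ell_noncomm:
  assumes t: "t < n" and nL: "\<not> \<Lambda> t"
  shows "ex (F n) (ell \<Lambda> t) = ex (F n) (\<lambda>p. ln (pmf (\<pi> (fst (p ! t))) (snd (p ! t))))
     - (\<Sum>i<N. ex (F n) (\<lambda>p. ln (pmf (cv \<Lambda> i t p) (gv i t p))))"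
proof -
  have "ex (F n) (ell \<Lambda> t) = ex (F n) (\<lambda>p. ln (pmf (\<pi> (fst (p ! t))) (snd (p ! t))) - (\<Sum>i<N. ln (pmf (cv \<Lambda> i t p) (gv i t p))))"
    by (rule ex_cong, rule ell_noncomm[where \<Lambda>=\<Lambda>], assumption, rule t, rule nL)
  then show ?thesis by (simp add: ex_diff ex_sum)
qed

lemma ell_mono:
  assumes t: "t < n" and nL: "\<not> \<Lambda> t"
  shows "ex (F n) (ell \<Lambda> t) \<le> ex (F n) (ell L0 t)"
proof -
  have g: "ex (F n) (\<lambda>p. ln (pmf (cv L0 i t p) (gv i t p))) \<le> ex (F n) (\<lambda>p. ln (pmf (cv \<Lambda> i t p) (gv i t p)))"
    if i: "i < N" for i
  proof (rule gibbs[OF F_fin disint_agent[OF i t]])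
    show "cv \<Lambda> i t x = cv \<Lambda> i t y" if "x \<in> set_pmf (F n)" "y \<in> set_pmf (F n)" "Gv \<Lambda> i t x = Gv \<Lambda> i t y" for x y
      by (rule cv_meas[OF that(1,2) t that(3)])
    show "cv L0 i t x = cv L0 i t y" if "x \<in> set_pmf (F n)" "y \<in> set_pmf (F n)" "Gv \<Lambda> i t x = Gv \<Lambda> i t y" for x y
      by (rule cv0_meas[OF that(1,2) t that(3)])
    show "pmf (cv L0 i t x) (gv i t x) > 0" if "x \<in> set_pmf (F n)" for x
      by (rule cv_pos[OF that t i])
  qed
  show ?thesis unfolding ex_ell_noncomm[where \<Lambda>=\<Lambda>, OF t nL] ex_ell_noncomm[where \<Lambda>=L0, OF t, simplified]
    using g by (intro diff_left_mono sum_mono) auto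
qed

lemma ell0_nonneg:
  assumes t: "t < n"
  shows "0 \<le> ex (F n) (ell L0 t)"
proof -
  have "ex (F n) (\<lambda>p. ln (pmf (act L0 t (take t p) (fst (p ! t))) (snd (p ! t)))) \<le>
        ex (F n) (\<lambda>p. ln (pmf (\<pi> (fst (p ! t))) (snd (p ! t))))"
  proof (rule gibbs[OF F_fin disint_pi[OF t], where d="\<lambda>p. act L0 t (take t p) (fst (p ! t))"])
    show "pmf (act L0 t (take t x) (fst (x ! t))) (snd (x ! t)) > 0" if "x \<in> set_pmf (F n)" for x
      by (rule act_pos[OF that t])
  qed auto
  moreover have "ell L0 t = (\<lambda>p. ln (pmf (\<pi> (fst (p ! t))) (snd (p ! t))) - ln (pmf (act L0 t (take t p) (fst (p ! t))) (snd (p ! t))))"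
    by (rule ext) (simp add: ell_def)
  ultimately show ?thesis by (simp add: ex_diff)
qed

definition kl where "kl \<Lambda> n = (\<Sum>t<n. ex (F n) (ell \<Lambda> t))"

lemma kl_bound: "kl \<Lambda> n \<le> (\<Sum>t<n. if \<Lambda> t then 0 else ex (F n) (ell L0 t))"
  unfolding kl_def
proof (intro sum_mono)
  fix t assume t: "t \<in> {..<n}"
  show "ex (F n) (ell \<Lambda> t) \<le> (if \<Lambda> t then 0 else ex (F n) (ell L0 t))"
  proof (cases "\<Lambda> t")
    case True
    then show ?thesis by (simp add: ell_comm ex_def)
  next
    case False
    then show ?thesis using ell_mono[of t n \<Lambda>] t by simp
  qed
qed

lemma kl_main: "kl \<Lambda> n \<le> kl L0 n"
proof -
  have "kl \<Lambda> n \<le> (\<Sum>t<n. if \<Lambda> t then 0 else ex (F n) (ell L0 t))" by (rule kl_bound)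
  also have "\<dots> \<le> kl L0 n" unfolding kl_def
    by (intro sum_mono) (auto simp: ell0_nonneg)
  finally show ?thesis .
qed


lemma KL_eq: "pmf_KL (F n) (Q \<Lambda> n) = ereal (kl \<Lambda> n)"
  by (simp add: KL_formula kl_def)

lemma KL_sum_eq: "(\<Sum>x\<in>set_pmf (F n). pmf (F n) x * ln (pmf (F n) x / pmf (Q \<Lambda> n) x)) = kl \<Lambda> n"
proof -
  have nz: "\<not> (\<exists>x\<in>set_pmf (F n). pmf (Q \<Lambda> n) x = 0)"
  proof
    assume "\<exists>x\<in>set_pmf (F n). pmf (Q \<Lambda> n) x = 0"
    then obtain x where "x \<in> set_pmf (F n)" "pmf (Q \<Lambda> n) x = 0" by blast
    with lr[OF this(1), of \<Lambda>] show False by simp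
  qed
  have "pmf_KL (F n) (Q \<Lambda> n) = ereal (\<Sum>x\<in>set_pmf (F n). pmf (F n) x * ln (pmf (F n) x / pmf (Q \<Lambda> n) x))"
    using nz by (simp add: pmf_KL_def)
  then show ?thesis using KL_eq by simp
qed

lemma kl_mix:
  assumes q: "0 < q" "q \<le> 1"
  shows "pmf_KL (F n) (bind_pmf (Pi_pmf {..<n} False (\<lambda>_. bernoulli_pmf (1 - q))) (\<lambda>\<Lambda>. Q \<Lambda> n))
           \<le> ereal (q * kl L0 n)"
proof -
  define B where "B = Pi_pmf {..<n} False (\<lambda>_. bernoulli_pmf (1 - q))"
  have finB: "finite (set_pmf B)"
    unfolding B_def by (subst set_Pi_pmf) auto
  have "pmf_KL (F n) (bind_pmf B (\<lambda>\<Lambda>. Q \<Lambda> n)) \<le>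
        ereal (ex B (\<lambda>\<Lambda>. \<Sum>x\<in>set_pmf (F n). pmf (F n) x * ln (pmf (F n) x / pmf (Q \<Lambda> n) x)))"
    by (rule KL_mix[OF F_fin finB]) (use lr in blast)
  also have "ex B (\<lambda>\<Lambda>. \<Sum>x\<in>set_pmf (F n). pmf (F n) x * ln (pmf (F n) x / pmf (Q \<Lambda> n) x)) = ex B (\<lambda>\<Lambda>. kl \<Lambda> n)"
    by (intro ex_cong) (rule KL_sum_eq)
  also have "ex B (\<lambda>\<Lambda>. kl \<Lambda> n) \<le> ex B (\<lambda>\<Lambda>. \<Sum>t<n. if \<Lambda> t then 0 else ex (F n) (ell L0 t))"
    by (intro ex_mono kl_bound)
  also have "\<dots> = (\<Sum>t<n. ex (F n) (ell L0 t) * ex B (\<lambda>\<Lambda>. if \<Lambda> t then 0 else 1))"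
  proof -
    have "ex B (\<lambda>\<Lambda>. \<Sum>t<n. if \<Lambda> t then 0 else ex (F n) (ell L0 t)) =
          ex B (\<lambda>\<Lambda>. \<Sum>t<n. ex (F n) (ell L0 t) * (if \<Lambda> t then 0 else 1))"
      by (intro ex_cong sum.cong) auto
    also have "\<dots> = (\<Sum>t<n. ex (F n) (ell L0 t) * ex B (\<lambda>\<Lambda>. if \<Lambda> t then 0 else 1))"
      by (simp add: ex_sum ex_cmult)
    finally show ?thesis .
  qed
  also have "\<dots> = (\<Sum>t<n. ex (F n) (ell L0 t) * q)"
  proof (intro sum.cong refl)
    fix t assume t: "t \<in> {..<n}"
    have "ex B (\<lambda>\<Lambda>. if \<Lambda> t then 0 else 1) = ex (map_pmf (\<lambda>\<Lambda>. \<Lambda> t) B) (\<lambda>b. if b then 0 else 1)"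
      using finB by (simp add: ex_map)
    also have "map_pmf (\<lambda>\<Lambda>. \<Lambda> t) B = bernoulli_pmf (1 - q)"
      unfolding B_def using t by (subst Pi_pmf_component) auto
    also have "ex (bernoulli_pmf (1 - q)) (\<lambda>b. if b then 0 else 1) = q"
      using q by (subst ex_integral) (auto intro: finite_subset[of _ "UNIV :: bool set"])
    finally show "ex (F n) (ell L0 t) * ex B (\<lambda>\<Lambda>. if \<Lambda> t then 0 else 1) = ex (F n) (ell L0 t) * q" by simp
  qed
  also have "\<dots> = q * kl L0 n"
    by (simp add: kl_def sum_distrib_left mult.commute)
  finally show ?thesis unfolding B_def by simp
qed


lemma img_eq: "img_prefix N sI T \<pi> 0 n = Q L0 n"
proof -
  have "(\<lambda>t. enat t < 0) = L0" by (rule ext) simp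
  then show ?thesis unfolding img_prefix_def int_prefix_proc by simp
qed

lemma final_i:
  "pmf_KL (full_prefix N sI T \<pi> n) (int_prefix N sI T \<pi> \<Lambda> n) \<le>
   pmf_KL (full_prefix N sI T \<pi> n) (img_prefix N sI T \<pi> 0 n)"
  unfolding img_eq int_prefix_proc full_prefix_proc KL_eq using kl_main by simp

lemma final_ii:
  assumes q: "0 < q" "q \<le> 1"
  shows "ereal (1 / q) * pmf_KL (full_prefix N sI T \<pi> n) (int_mix_prefix N sI T \<pi> q n) \<le>
   pmf_KL (full_prefix N sI T \<pi> n) (img_prefix N sI T \<pi> 0 n)"
proof -
  have "ereal (1 / q) * pmf_KL (full_prefix N sI T \<pi> n) (int_mix_prefix N sI T \<pi> q n) \<le>
        ereal (1 / q) * ereal (q * kl L0 n)"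
    unfolding int_mix_prefix_def int_prefix_proc full_prefix_proc
    by (rule ereal_mult_left_mono[OF kl_mix[OF q]]) (use q in simp)
  also have "\<dots> = ereal (kl L0 n)" using q by simp
  also have "\<dots> = pmf_KL (full_prefix N sI T \<pi> n) (img_prefix N sI T \<pi> 0 n)"
    unfolding img_eq full_prefix_proc KL_eq ..
  finally show ?thesis .
qed

end

theorem lemma2:
  fixes N :: nat
    and S :: "nat \<Rightarrow> 's set" and sI :: "nat \<Rightarrow> 's"
    and A :: "nat \<Rightarrow> 'a set" and T :: "nat \<Rightarrow> 's \<Rightarrow> 'a \<Rightarrow> 's pmf"
    and \<pi> :: "(nat \<Rightarrow> 's) \<Rightarrow> (nat \<Rightarrow> 'a) pmf"
  assumes "wf_game N S sI A T \<pi>"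
  shows "(\<forall>\<Lambda> :: nat \<Rightarrow> bool.
            path_KL (full_prefix N sI T \<pi>) (img_prefix N sI T \<pi> 0)
              \<ge> path_KL (full_prefix N sI T \<pi>) (int_prefix N sI T \<pi> \<Lambda>))
       \<and> (\<forall>q :: real. 0 < q \<and> q \<le> 1 \<longrightarrow>
            path_KL (full_prefix N sI T \<pi>) (img_prefix N sI T \<pi> 0)
              \<ge> ereal (1 / q) * path_KL (full_prefix N sI T \<pi>) (int_mix_prefix N sI T \<pi> q))"
proof -
  interpret wgame N S sI A T \<pi> by unfold_locales (rule assms)
  show ?thesis
  proof (intro conjI allI impI)
    fix \<Lambda> :: "nat \<Rightarrow> bool"
    show "path_KL (full_prefix N sI T \<pi>) (img_prefix N sI T \<pi> 0)
              \<ge> path_KL (full_prefix N sI T \<pi>) (int_prefix N sI T \<pi> \<Lambda>)"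
      unfolding path_KL_def by (intro SUP_mono) (auto intro: final_i)
  next
    fix q :: real assume q: "0 < q \<and> q \<le> 1"
    have "ereal (1 / q) * path_KL (full_prefix N sI T \<pi>) (int_mix_prefix N sI T \<pi> q) =
          (SUP n. ereal (1 / q) * pmf_KL (full_prefix N sI T \<pi> n) (int_mix_prefix N sI T \<pi> q n))"
      unfolding path_KL_def using q by (intro Sup_ereal_mult_left') auto
    also have "\<dots> \<le> path_KL (full_prefix N sI T \<pi>) (img_prefix N sI T \<pi> 0)"
      unfolding path_KL_def using q by (intro SUP_mono) (auto intro: final_ii)
    finally show "path_KL (full_prefix N sI T \<pi>) (img_prefix N sI T \<pi> 0)
              \<ge> ereal (1 / q) * path_KL (full_prefix N sI T \<pi>) (int_mix_prefix N sI T \<pi> q)" .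
  qed
qed

end
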